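(* Let $v\in\mathbb N_0^N$, $\mathbb T\in\mathrm{Tab}_\lambda$ and $1\le j\le N$. Then there are elements $H_u$ ($u\in\mathbb N_0^N$, $u\trianglelefteq v$) of the Hecke algebra such that $$x^v\,\mathbb T\,\Xi_j=x^v\otimes(\mathbb TH_v)+\sum_{v'\lhd v}x^{v'}\otimes(\mathbb TH_{v'}).$$
   Context: $N\ge2$, $q,s$ indeterminates, $K=\mathbb C(q,s)$. Operators act on the right, composed left to right. $\mathcal H_N(s)$ is generated by $T_1,\dots,T_{N-1}$ with $(T_i+1)(T_i-s)=0$ and braid relations. $\lambda$ is a partition of $N$ (French convention, rows numbered bottom to top); $\mathrm{Tab}_\lambda$ = reverse standard tableaux (bijective fillings by $1,\dots,N$ strictly decreasing left to right in rows and bottom to top in columns); $\mathrm{CT}_{\mathbb T}[i]$ = column minus row of the cell of $i$; $\mathbb T^{(i,j)}$ exchanges $i,j$. $V_\lambda$ has basis $\mathrm{Tab}_\lambda$ with right action $\mathbb TT_i=s\mathbb T$ if $i,i+1$ share a row, $-\mathbb T$ if they share a column, and if $i$ is in a higher row than $i+1$, with $m=\mathrm{CT}_{\mathbb T}[i+1]-\mathrm{CT}_{\mathbb T}[i]>0$, $\mathbb TT_i=\frac{s-1}{1-s^m}\mathbb T+\frac{s(1-s^{m+1})(1-s^{m-1})}{(1-s^m)^2}\mathbb T^{(i,i+1)}$; the remaining case is determined by this formula for $\mathbb T^{(i,i+1)}$ and the quadratic relation. $\mathcal M_\lambda=K[x_1,\dots,x_N]\otimes V_\lambda$, $x^v=x_1^{v_1}\cdots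 x_N^{v_N}$. With $p^{s_i}$ = $p$ with $x_i,x_{i+1}$ exchanged: $(p\otimes u)\mathbf T_i=(1-s)\frac{x_{i+1}(p-p^{s_i})}{x_i-x_{i+1}}\otimes u+p^{s_i}\otimes uT_i$, $(p\otimes u)\mathbf w=p(qx_N,x_1,\dots,x_{N-1})\otimes uT_1\cdots T_{N-1}$, $\mathbf T_i^{-1}=s^{-1}(\mathbf T_i+1-s)$, $\Xi_j=s^{j-N}\mathbf T_{j-1}^{-1}\cdots\mathbf T_1^{-1}\mathbf w\mathbf T_{N-1}\cdots\mathbf T_j$. Orders: $v^+$ is the decreasing rearrangement of $v$; $v\preceq v'$ iff $\sum_{k\le i}v_k\le\sum_{k\le i}v'_k$ for all $i$; $v\trianglelefteq v'$ iff either $v^+\ne v'^+$ and $v^+\preceq v'^+$, or $v^+=v'^+$ and $v\preceq v'$; $v'\lhd v$ means $v'\trianglelefteq v$ and $v'\neq v$. *)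

theory Defs
  imports "HOL-Library.Poly_Mapping" "HOL-Computational_Algebra.Polynomial"
          "HOL-Computational_Algebra.Fraction_Field"
begin

section \<open>The base field K = C(q,s)\<close>

type_synonym K = "complex poly poly fract"

definition s_par :: K where
  "s_par = Fract [:[:0, 1:]:] 1"     \<comment> \<open>inner indeterminate s\<close>

definition q_par :: K where
  "q_par = Fract [:0, 1:] 1"         \<comment> \<open>outer indeterminate q\<close>

text \<open>Monomials: finitely supported exponent maps; variable x_k (k = 1..N) has key k-1.\<close>
type_synonym mpoly = "(nat \<Rightarrow>\<^sub>0 nat) \<Rightarrow>\<^sub>0 K"

definition const :: "K \<Rightarrow> mpoly" where
  "const c = Poly_Mapping.single 0 c"

definition Xv :: "nat \<Rightarrow> mpoly" where
  "Xv k = Poly_Mapping.single (Poly_Mapping.single (k - 1) 1) 1"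

definition mono :: "nat list \<Rightarrow> (nat \<Rightarrow>\<^sub>0 nat)" where
  "mono v = Poly_Mapping.nth v"

definition psubst :: "(nat \<Rightarrow> mpoly) \<Rightarrow> mpoly \<Rightarrow> mpoly" where
  "psubst \<sigma> p = (\<Sum>m\<in>Poly_Mapping.keys p. const (Poly_Mapping.lookup p m) *
                      (\<Prod>k\<in>Poly_Mapping.keys m. \<sigma> (k + 1) ^ Poly_Mapping.lookup m k))"

definition swapvars :: "nat \<Rightarrow> mpoly \<Rightarrow> mpoly" where
  "swapvars i p = psubst (\<lambda>k. if k = i then Xv (i + 1) else if k = i + 1 then Xv i else Xv k) p"

definition wsubst :: "nat \<Rightarrow> mpoly \<Rightarrow> mpoly" where
  "wsubst N p = psubst (\<lambda>k. if k = 1 then const q_par * Xv N else Xv (k - 1)) p"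

text \<open>x_{i+1}(p - p^{s_i})/(x_i - x_{i+1}) (an exact polynomial division).\<close>
definition ddiff :: "nat \<Rightarrow> mpoly \<Rightarrow> mpoly" where
  "ddiff i p = (THE r. r * (Xv i - Xv (i + 1)) = Xv (i + 1) * (p - swapvars i p))"

section \<open>Partitions and reverse standard tableaux (French convention)\<close>

text \<open>A partition of N: weakly decreasing list of positive parts summing to N;
  lam ! r is the length of row r (rows numbered bottom to top from 0).\<close>
definition is_partition :: "nat list \<Rightarrow> nat \<Rightarrow> bool" where
  "is_partition lam N \<longleftrightarrow> sorted (rev lam) \<and> (\<forall>x\<in>set lam. 0 < x) \<and> sum_list lam = N"

definition cells :: "nat list \<Rightarrow> (nat \<times> nat) set" where
  "cells lam = {(r, c). r < length lam \<and> c < lam ! r}"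

text \<open>A tableau is the list whose (i-1)-th entry is the cell (row, column) containing i.\<close>
type_synonym tab = "(nat \<times> nat) list"

definition Tab :: "nat list \<Rightarrow> nat \<Rightarrow> tab set" where
  "Tab lam N = {L. length L = N \<and> distinct L \<and> set L = cells lam \<and>
     (\<forall>a<N. \<forall>b<N. \<forall>r c. L ! a = (r, c) \<and> L ! b = (r, Suc c) \<longrightarrow> b < a) \<and>
     (\<forall>a<N. \<forall>b<N. \<forall>r c. L ! a = (r, c) \<and> L ! b = (Suc r, c) \<longrightarrow> b < a)}"

definition cell_of :: "tab \<Rightarrow> nat \<Rightarrow> nat \<times> nat" where
  "cell_of L i = L ! (i - 1)"

definition CT :: "tab \<Rightarrow> nat \<Rightarrow> int" where
  "CT L i = int (snd (cell_of L i)) - int (fst (cell_of L i))"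

definition tswap :: "tab \<Rightarrow> nat \<Rightarrow> tab" where
  "tswap L i = L[i - 1 := L ! i, i := L ! (i - 1)]"

type_synonym vec = "tab \<Rightarrow> K"

definition basis :: "tab \<Rightarrow> vec" where
  "basis T = (\<lambda>U. if U = T then 1 else 0)"

text \<open>Coefficient of U in T T_i.  The last case (i in a lower row than i+1) is the one
  forced by the formula for T^{(i,i+1)} T_i together with (T_i+1)(T_i-s)=0.\<close>
definition coefT :: "nat \<Rightarrow> tab \<Rightarrow> tab \<Rightarrow> K" where
  "coefT i T U =
    (let a = cell_of T i; b = cell_of T (i + 1) in
     if fst a = fst b then (if U = T then s_par else 0)
     else if snd a = snd b then (if U = T then -1 else 0)
     else if fst b < fst a then
       (let m = nat (CT T (i + 1) - CT T i) in
          (if U = T then (s_par - 1) / (1 - s_par ^ m) else 0)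
        + (if U = tswap T i then
             s_par * (1 - s_par ^ (m + 1)) * (1 - s_par ^ (m - 1)) / (1 - s_par ^ m)^2
           else 0))
     else
       (let m = nat (CT T i - CT T (i + 1)) in
          (if U = T then s_par - 1 - (s_par - 1) / (1 - s_par ^ m) else 0)
        + (if U = tswap T i then 1 else 0)))"

definition vecT :: "nat list \<Rightarrow> nat \<Rightarrow> nat \<Rightarrow> vec \<Rightarrow> vec" where
  "vecT lam N i u = (\<lambda>U. \<Sum>T\<in>Tab lam N. u T * coefT i T U)"

text \<open>Action of a word T_{w_1} T_{w_2} ... T_{w_k} (applied left to right).\<close>
definition vec_word :: "nat list \<Rightarrow> nat \<Rightarrow> nat list \<Rightarrow> vec \<Rightarrow> vec" where
  "vec_word lam N w u = fold (vecT lam N) w u"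

text \<open>Elements of the Hecke algebra H_N(s), represented (via the surjection from the free
  algebra on T_1..T_{N-1}) as finite K-linear combinations of words in the generators.\<close>
type_synonym hecke = "nat list \<Rightarrow>\<^sub>0 K"

definition is_hecke :: "nat \<Rightarrow> hecke \<Rightarrow> bool" where
  "is_hecke N h \<longleftrightarrow> (\<forall>w\<in>Poly_Mapping.keys h. set w \<subseteq> {1..<N})"

definition hact :: "nat list \<Rightarrow> nat \<Rightarrow> vec \<Rightarrow> hecke \<Rightarrow> vec" where
  "hact lam N u h = (\<lambda>U. \<Sum>w\<in>Poly_Mapping.keys h. Poly_Mapping.lookup h w * vec_word lam N w u U)"

text \<open>An element is written \<Sum>_T p_T \<otimes> T, stored as T \<mapsto> p_T.\<close>
type_synonym modl = "tab \<Rightarrow> mpoly"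

definition tensor :: "nat list \<Rightarrow> vec \<Rightarrow> modl" where
  "tensor v u = (\<lambda>U. Poly_Mapping.single (mono v) (u U))"

definition mlin :: "nat list \<Rightarrow> nat \<Rightarrow> (mpoly \<Rightarrow> mpoly) \<Rightarrow> (vec \<Rightarrow> vec) \<Rightarrow> modl \<Rightarrow> modl" where
  "mlin lam N \<phi> g f = (\<lambda>U. \<Sum>T\<in>Tab lam N. \<phi> (f T) * const (g (basis T) U))"

definition opT :: "nat list \<Rightarrow> nat \<Rightarrow> nat \<Rightarrow> modl \<Rightarrow> modl" where
  "opT lam N i f = (\<lambda>U. const (1 - s_par) * ddiff i (f U)
                        + mlin lam N (swapvars i) (vecT lam N i) f U)"

definition opTinv :: "nat list \<Rightarrow> nat \<Rightarrow> nat \<Rightarrow> modl \<Rightarrow> modl" where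
  "opTinv lam N i f = (\<lambda>U. const (inverse s_par) * (opT lam N i f U + const (1 - s_par) * f U))"

definition opW :: "nat list \<Rightarrow> nat \<Rightarrow> modl \<Rightarrow> modl" where
  "opW lam N f = mlin lam N (wsubst N) (vec_word lam N [1..<N]) f"

text \<open>\<Xi>_j = s^{j-N} T_{j-1}^{-1} ... T_1^{-1} w T_{N-1} ... T_j, operators applied left to right.\<close>
definition Xi :: "nat list \<Rightarrow> nat \<Rightarrow> nat \<Rightarrow> modl \<Rightarrow> modl" where
  "Xi lam N j f =
     (let f1 = fold (opTinv lam N) (rev [1..<j]) f;
          f2 = opW lam N f1;
          f3 = fold (opT lam N) (rev [j..<N]) f2
      in (\<lambda>U. const (inverse (s_par ^ (N - j))) * f3 U))"

definition dom_le :: "nat list \<Rightarrow> nat list \<Rightarrow> bool" where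
  "dom_le v v' \<longleftrightarrow> (\<forall>i\<le>length v. sum_list (take i v) \<le> sum_list (take i v'))"

definition dec_rearr :: "nat list \<Rightarrow> nat list" where
  "dec_rearr v = rev (sort v)"

definition tri_le :: "nat list \<Rightarrow> nat list \<Rightarrow> bool" where
  "tri_le v v' \<longleftrightarrow>
     (dec_rearr v \<noteq> dec_rearr v' \<and> dom_le (dec_rearr v) (dec_rearr v'))
     \<or> (dec_rearr v = dec_rearr v' \<and> dom_le v v')"

definition tri_lt :: "nat list \<Rightarrow> nat list \<Rightarrow> bool" where
  "tri_lt v' v \<longleftrightarrow> tri_le v' v \<and> v' \<noteq> v"

end

theory Submission
  imports Defs "HOL-Combinatorics.Permutations"
begin


lemma const_add: "const (a + b) = const a + const b"
  by (simp add: const_def single_add)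
lemma const_zero[simp]: "const 0 = 0"
  by (simp add: const_def)
lemma const_mult: "const (a * b) = const a * const b"
  by (simp add: const_def mult_single)
lemma const_one[simp]: "const 1 = 1"
  by (simp add: const_def)
lemma const_single: "const c * Poly_Mapping.single e b = Poly_Mapping.single e (c * b)"
  by (simp add: const_def mult_single)

definition Msub :: "(nat \<Rightarrow> mpoly) \<Rightarrow> (nat \<Rightarrow>\<^sub>0 nat) \<Rightarrow> mpoly" where
  "Msub \<sigma> m = (\<Prod>k\<in>Poly_Mapping.keys m. \<sigma> (k + 1) ^ Poly_Mapping.lookup m k)"

lemma psubst_superset:
  assumes "finite A" "Poly_Mapping.keys p \<subseteq> A"
  shows "psubst \<sigma> p = (\<Sum>m\<in>A. const (Poly_Mapping.lookup p m) * Msub \<sigma> m)"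
  unfolding psubst_def Msub_def
  by (rule sum.mono_neutral_left) (use assms in \<open>auto simp: in_keys_iff\<close>)

lemma psubst_add: "psubst \<sigma> (p + q) = psubst \<sigma> p + psubst \<sigma> q"
proof -
  let ?A = "Poly_Mapping.keys p \<union> Poly_Mapping.keys q"
  have f: "finite ?A" by simp
  have "psubst \<sigma> (p + q) = (\<Sum>m\<in>?A. const (Poly_Mapping.lookup (p+q) m) * Msub \<sigma> m)"
    by (rule psubst_superset[OF f]) (meson keys_add)
  also have "\<dots> = (\<Sum>m\<in>?A. const (Poly_Mapping.lookup p m) * Msub \<sigma> m)
                 + (\<Sum>m\<in>?A. const (Poly_Mapping.lookup q m) * Msub \<sigma> m)"
    by (simp add: lookup_add const_add distrib_right sum.distrib)
  also have "\<dots> = psubst \<sigma> p + psubst \<sigma> q"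
    by (simp add: psubst_superset[OF f])
  finally show ?thesis .
qed

lemma psubst_zero[simp]: "psubst \<sigma> 0 = 0"
  by (simp add: psubst_def)

lemma psubst_single: "psubst \<sigma> (Poly_Mapping.single m c) = const c * Msub \<sigma> m"
proof -
  have "psubst \<sigma> (Poly_Mapping.single m c) = (\<Sum>m'\<in>{m}. const (Poly_Mapping.lookup (Poly_Mapping.single m c) m') * Msub \<sigma> m')"
    by (rule psubst_superset) auto
  then show ?thesis by simp
qed

lemma psubst_sum: "psubst \<sigma> (sum f A) = (\<Sum>a\<in>A. psubst \<sigma> (f a))"
  by (induction A rule: infinite_finite_induct) (auto simp: psubst_add)

lemma single_single_power:
  "(Poly_Mapping.single (Poly_Mapping.single t (1::nat)) (g::K)) ^ n
     = Poly_Mapping.single (Poly_Mapping.single t n) (g ^ n)"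
proof (induction n)
  case 0 then show ?case by simp
next
  case (Suc n)
  then show ?case by (simp add: mult_single single_add[symmetric])
qed

lemma prod_singles:
  "(\<Prod>k\<in>A. Poly_Mapping.single (e k) (c k) :: mpoly)
     = Poly_Mapping.single (\<Sum>k\<in>A. e k) (\<Prod>k\<in>A. c k)"
  by (induction A rule: infinite_finite_induct) (auto simp: mult_single)

lemma Msub_mono:
  assumes "\<And>k. \<sigma> (k + 1) = Poly_Mapping.single (Poly_Mapping.single (\<tau> k) 1) (\<gamma> k)"
  shows "Msub \<sigma> m = Poly_Mapping.single
            (\<Sum>k\<in>Poly_Mapping.keys m. Poly_Mapping.single (\<tau> k) (Poly_Mapping.lookup m k))
            (\<Prod>k\<in>Poly_Mapping.keys m. \<gamma> k ^ Poly_Mapping.lookup m k)"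
  unfolding Msub_def assms single_single_power prod_singles ..



definition mon :: "nat list \<Rightarrow> mpoly" where
  "mon u = Poly_Mapping.single (mono u) 1"

lemma lookup_mono: "Poly_Mapping.lookup (mono u) k = nth_default 0 u k"
  by (simp add: mono_def)

lemma keys_mono_sub: "Poly_Mapping.keys (mono u) \<subseteq> {..<length u}"
  by (auto simp: in_keys_iff lookup_mono nth_default_def split: if_splits)

lemma sum_when_superset:
  assumes "finite A" "Poly_Mapping.keys m \<subseteq> A"
    "\<And>k. k \<in> A \<Longrightarrow> (\<tau> k = t) = (k = r)"
  shows "Poly_Mapping.lookup (\<Sum>k\<in>Poly_Mapping.keys m. Poly_Mapping.single (\<tau> k) (Poly_Mapping.lookup m k)) t
     = (if r \<in> A then Poly_Mapping.lookup m r else 0)"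
proof -
  have "Poly_Mapping.lookup (\<Sum>k\<in>Poly_Mapping.keys m. Poly_Mapping.single (\<tau> k) (Poly_Mapping.lookup m k)) t
      = (\<Sum>k\<in>Poly_Mapping.keys m. (Poly_Mapping.lookup m k when \<tau> k = t))"
    by (simp add: lookup_sum lookup_single)
  also have "\<dots> = (\<Sum>k\<in>A. (Poly_Mapping.lookup m k when \<tau> k = t))"
    by (rule sum.mono_neutral_left) (use assms in \<open>auto simp: in_keys_iff\<close>)
  also have "\<dots> = (\<Sum>k\<in>A. (if k = r then Poly_Mapping.lookup m k else 0))"
    by (rule sum.cong) (auto simp: assms(3) when_def)
  also have "\<dots> = (if r \<in> A then Poly_Mapping.lookup m r else 0)"
    using assms(1) by simp
  finally show ?thesis .
qed

definition swl :: "nat \<Rightarrow> nat list \<Rightarrow> nat list" where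
  "swl p u = u[p := u ! Suc p, Suc p := u ! p]"

definition rot :: "nat list \<Rightarrow> nat list" where
  "rot u = tl u @ [hd u]"

lemma swapvars_single:
  assumes "1 \<le> i" "i < length u"
  shows "swapvars i (Poly_Mapping.single (mono u) c) = Poly_Mapping.single (mono (swl (i - 1) u)) c"
proof -
  define \<tau> where "\<tau> k = (if k = i - 1 then i else if k = i then i - 1 else k)" for k
  define \<sigma> where "\<sigma> = (\<lambda>k. if k = i then Xv (i + 1) else if k = i + 1 then Xv i else Xv k)"
  have s: "\<And>k. \<sigma> (k + 1)
          = Poly_Mapping.single (Poly_Mapping.single (\<tau> k) 1) 1"
    using assms(1) by (auto simp: Xv_def \<tau>_def \<sigma>_def)
  have sv: "swapvars i = psubst \<sigma>" by (simp add: swapvars_def[abs_def] \<sigma>_def)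
  have E: "(\<Sum>k\<in>Poly_Mapping.keys (mono u). Poly_Mapping.single (\<tau> k) (Poly_Mapping.lookup (mono u) k))
        = mono (swl (i - 1) u)"
  proof (rule poly_mapping_eqI)
    fix t
    have "Poly_Mapping.lookup (\<Sum>k\<in>Poly_Mapping.keys (mono u). Poly_Mapping.single (\<tau> k) (Poly_Mapping.lookup (mono u) k)) t
       = (if \<tau> t \<in> {..<length u} then Poly_Mapping.lookup (mono u) (\<tau> t) else 0)"
      by (rule sum_when_superset) (use keys_mono_sub assms in \<open>auto simp: \<tau>_def\<close>)
    also have "\<dots> = Poly_Mapping.lookup (mono (swl (i - 1) u)) t"
      using assms by (auto simp: lookup_mono nth_default_def \<tau>_def swl_def nth_list_update)
    finally show "Poly_Mapping.lookup (\<Sum>k\<in>Poly_Mapping.keys (mono u). Poly_Mapping.single (\<tau> k) (Poly_Mapping.lookup (mono u) k)) t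
       = Poly_Mapping.lookup (mono (swl (i - 1) u)) t" .
  qed
  show ?thesis
    unfolding sv psubst_single Msub_mono[where \<sigma>=\<sigma> and \<tau>=\<tau> and \<gamma>="\<lambda>_. 1", OF s] E
    by (simp add: const_single)
qed

lemma wsubst_single:
  assumes "length u = N" "1 \<le> N"
  shows "wsubst N (Poly_Mapping.single (mono u) c) = Poly_Mapping.single (mono (rot u)) (c * q_par ^ (u ! 0))"
proof -
  define \<tau> where "\<tau> k = (if k = 0 then N - 1 else k - 1)" for k
  define \<gamma> :: "nat \<Rightarrow> K" where "\<gamma> k = (if k = 0 then q_par else 1)" for k
  define \<sigma> where "\<sigma> = (\<lambda>k. if k = 1 then const q_par * Xv N else Xv (k - 1))"
  have s: "\<And>k. \<sigma> (k + 1)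
          = Poly_Mapping.single (Poly_Mapping.single (\<tau> k) 1) (\<gamma> k)"
    by (auto simp: Xv_def \<tau>_def \<gamma>_def const_single \<sigma>_def)
  have sv: "wsubst N = psubst \<sigma>" by (simp add: wsubst_def[abs_def] \<sigma>_def)
  have E: "(\<Sum>k\<in>Poly_Mapping.keys (mono u). Poly_Mapping.single (\<tau> k) (Poly_Mapping.lookup (mono u) k))
        = mono (rot u)"
  proof (rule poly_mapping_eqI)
    fix t
    define r where "r = (if t < N then (if t = N - 1 then 0 else t + 1) else N)"
    have "Poly_Mapping.lookup (\<Sum>k\<in>Poly_Mapping.keys (mono u). Poly_Mapping.single (\<tau> k) (Poly_Mapping.lookup (mono u) k)) t
       = (if r \<in> {..<length u} then Poly_Mapping.lookup (mono u) r else 0)"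
      by (rule sum_when_superset) (use keys_mono_sub assms in \<open>auto simp: \<tau>_def r_def\<close>)
    also have "\<dots> = Poly_Mapping.lookup (mono (rot u)) t"
      using assms by (cases u) (auto simp: lookup_mono nth_default_def r_def rot_def nth_append)
    finally show "Poly_Mapping.lookup (\<Sum>k\<in>Poly_Mapping.keys (mono u). Poly_Mapping.single (\<tau> k) (Poly_Mapping.lookup (mono u) k)) t
       = Poly_Mapping.lookup (mono (rot u)) t" .
  qed
  have G: "(\<Prod>k\<in>Poly_Mapping.keys (mono u). \<gamma> k ^ Poly_Mapping.lookup (mono u) k) = q_par ^ (u ! 0)"
  proof -
    have "(\<Prod>k\<in>Poly_Mapping.keys (mono u). \<gamma> k ^ Poly_Mapping.lookup (mono u) k)
        = (\<Prod>k\<in>{..<N}. \<gamma> k ^ Poly_Mapping.lookup (mono u) k)"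
      by (rule prod.mono_neutral_left) (use keys_mono_sub assms in \<open>auto simp: in_keys_iff\<close>)
    also have "\<dots> = (\<Prod>k\<in>{..<N}. if k = 0 then q_par ^ Poly_Mapping.lookup (mono u) 0 else 1)"
      by (rule prod.cong) (auto simp: \<gamma>_def)
    also have "\<dots> = q_par ^ (u ! 0)"
      using assms by (simp add: lookup_mono nth_default_def)
    finally show ?thesis .
  qed
  show ?thesis
    unfolding sv psubst_single Msub_mono[where \<sigma>=\<sigma> and \<tau>=\<tau> and \<gamma>=\<gamma>, OF s] E G
    by (simp add: const_single)
qed



lemma mono_add_single:
  assumes "p < length w"
  shows "mono w + Poly_Mapping.single p 1 = mono (w[p := w ! p + 1])"
  by (rule poly_mapping_eqI) (use assms in \<open>auto simp: lookup_add lookup_mono lookup_single nth_default_def nth_list_update when_def\<close>)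

lemma mon_mult_Xv:
  assumes "1 \<le> i" "i \<le> length w"
  shows "mon w * Xv i = mon (w[i - 1 := w ! (i - 1) + 1])"
proof -
  have "i - 1 < length w" using assms by simp
  then show ?thesis
    unfolding mon_def Xv_def mult_single mono_add_single[OF \<open>i - 1 < length w\<close>] by simp
qed

lemma Xv_ne: "1 \<le> i \<Longrightarrow> Xv i - Xv (i + 1) \<noteq> 0"
proof
  assume "1 \<le> i" "Xv i - Xv (i + 1) = 0"
  then have e: "Xv i = Xv (i + 1)" by simp
  have "Poly_Mapping.single (i - 1) (1::nat) = Poly_Mapping.single i 1"
  proof (rule ccontr)
    assume "Poly_Mapping.single (i - 1) (1::nat) \<noteq> Poly_Mapping.single i 1"
    then have "Poly_Mapping.lookup (Xv i) (Poly_Mapping.single (i - 1) 1) \<noteq> Poly_Mapping.lookup (Xv (i+1)) (Poly_Mapping.single (i - 1) 1)"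
      unfolding Xv_def by (simp add: lookup_single when_def)
    with e show False by simp
  qed
  then have "Poly_Mapping.lookup (Poly_Mapping.single (i - 1) (1::nat)) (i - 1) = Poly_Mapping.lookup (Poly_Mapping.single i (1::nat)) (i - 1)"
    by simp
  then have "i - 1 = i"
    by (metis lookup_single_eq lookup_single_not_eq one_neq_zero)
  with \<open>1 \<le> i\<close> show False by simp
qed

lemma ddiff_eq:
  assumes "1 \<le> i" "r * (Xv i - Xv (i + 1)) = Xv (i + 1) * (p - swapvars i p)"
  shows "ddiff i p = r"
  unfolding ddiff_def
proof (rule the_equality)
  show "r * (Xv i - Xv (i + 1)) = Xv (i + 1) * (p - swapvars i p)" by fact
  fix r' assume "r' * (Xv i - Xv (i + 1)) = Xv (i + 1) * (p - swapvars i p)"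
  with assms(2) have "r' * (Xv i - Xv (i + 1)) = r * (Xv i - Xv (i + 1))" by simp
  with Xv_ne[OF assms(1)] show "r' = r" by simp
qed

definition dupd :: "nat list \<Rightarrow> nat \<Rightarrow> nat \<Rightarrow> nat list" where
  "dupd u p x = u[p := x, Suc p := u ! p + u ! Suc p - x]"

definition Dsum :: "nat list \<Rightarrow> nat \<Rightarrow> mpoly" where
  "Dsum u p = (if u ! Suc p < u ! p then (\<Sum>x\<in>{u ! Suc p..<u ! p}. mon (dupd u p x))
               else - (\<Sum>x\<in>{u ! p..<u ! Suc p}. mon (dupd u p x)))"

lemma swapvars_mon:
  assumes "1 \<le> i" "i < length u"
  shows "swapvars i (mon u) = mon (swl (i - 1) u)"
  unfolding mon_def using swapvars_single[OF assms] .

lemma Dsum_prop: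
  assumes "1 \<le> i" "i < length u"
  shows "Dsum u (i - 1) * (Xv i - Xv (i + 1)) = Xv (i + 1) * (mon u - swapvars i (mon u))"
proof -
  define p where "p = i - 1"
  have ip: "i = Suc p" using assms(1) by (simp add: p_def)
  have pl: "Suc p < length u" using assms ip by simp
  define a where "a = u ! p"
  define b where "b = u ! Suc p"
  define g where "g x = mon (u[p := x, Suc p := a + b + 1 - x])" for x
  have step: "mon (dupd u p x) * (Xv i - Xv (i + 1)) = g (Suc x) - g x" if "x \<le> a + b" for x
  proof -
    have "mon (dupd u p x) * Xv i = g (Suc x)"
      unfolding ip using pl
      by (simp add: mon_mult_Xv dupd_def g_def a_def b_def nth_list_update list_update_swap)
    moreover have "mon (dupd u p x) * Xv (i + 1) = g x"
      unfolding ip using pl that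
      by (simp add: mon_mult_Xv dupd_def g_def a_def b_def nth_list_update Suc_diff_le)
    ultimately show ?thesis by (simp add: right_diff_distrib)
  qed
  have tele: "(\<Sum>x\<in>{m..<n}. mon (dupd u p x)) * (Xv i - Xv (i + 1)) = g n - g m"
    if "m \<le> n" "n \<le> a + b" for m n
  proof -
    have "(\<Sum>x\<in>{m..<n}. mon (dupd u p x)) * (Xv i - Xv (i + 1))
        = (\<Sum>x\<in>{m..<n}. g (Suc x) - g x)"
      unfolding sum_distrib_right by (rule sum.cong) (use that step in auto)
    also have "\<dots> = g n - g m" by (rule sum_Suc_diff'[OF that(1)])
    finally show ?thesis .
  qed
  have ga: "g a = Xv (i + 1) * mon u"
    unfolding ip using pl by (simp add: mon_mult_Xv g_def a_def b_def mult.commute)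
  have gb0: "mon (swl p u) * Xv (Suc (Suc p)) = mon ((swl p u)[Suc (Suc p) - 1 := (swl p u) ! (Suc (Suc p) - 1) + 1])"
    by (rule mon_mult_Xv) (use pl in \<open>simp_all add: swl_def\<close>)
  have gb: "g b = Xv (i + 1) * mon (swl p u)"
    unfolding ip using pl gb0 by (simp add: g_def a_def b_def mult.commute swl_def nth_list_update)
  have rhs: "Xv (i + 1) * (mon u - swapvars i (mon u)) = g a - g b"
    using swapvars_mon[OF assms] ga gb by (simp add: p_def right_diff_distrib)
  show ?thesis
  proof (cases "b < a")
    case True
    then show ?thesis unfolding rhs Dsum_def p_def[symmetric] a_def[symmetric] b_def[symmetric]
      using tele[of b a] by simp
  next
    case False
    then have "- ((\<Sum>x\<in>{a..<b}. mon (dupd u p x)) * (Xv i - Xv (i + 1))) = g a - g b"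
      using tele[of a b] by simp
    then show ?thesis using False unfolding rhs Dsum_def p_def[symmetric] a_def[symmetric] b_def[symmetric]
      by simp
  qed
qed

lemma ddiff_single_prop:
  assumes "1 \<le> i" "i < length u"
  shows "const c * Dsum u (i - 1) * (Xv i - Xv (i + 1)) =
    Xv (i + 1) * (Poly_Mapping.single (mono u) c - swapvars i (Poly_Mapping.single (mono u) c))"
proof -
  have e: "Poly_Mapping.single (mono u) c = const c * mon u"
    by (simp add: mon_def const_single)
  have "swapvars i (Poly_Mapping.single (mono u) c) = const c * swapvars i (mon u)"
    using swapvars_single[OF assms] swapvars_mon[OF assms] by (simp add: mon_def const_single)
  moreover have "const c * (Dsum u (i - 1) * (Xv i - Xv (i + 1))) = const c * (Xv (i + 1) * (mon u - swapvars i (mon u)))"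
    using Dsum_prop[OF assms] by simp
  ultimately show ?thesis
    unfolding e by (simp add: algebra_simps)
qed

lemma ddiff_single:
  assumes "1 \<le> i" "i < length u"
  shows "ddiff i (Poly_Mapping.single (mono u) c) = const c * Dsum u (i - 1)"
  by (rule ddiff_eq[OF assms(1) ddiff_single_prop[OF assms]])

lemma swapvars_add: "swapvars i (p + q) = swapvars i p + swapvars i q"
  unfolding swapvars_def by (rule psubst_add)

lemma swapvars_zero[simp]: "swapvars i 0 = 0"
  unfolding swapvars_def by simp

lemma poly_expand: "p = (\<Sum>m\<in>Poly_Mapping.keys p. Poly_Mapping.single m (Poly_Mapping.lookup p m))"
  by (rule poly_mapping_eqI) (simp add: lookup_sum lookup_single when_def in_keys_iff)

lemma ddiff_exists:
  assumes "1 \<le> i"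
  shows "\<exists>r. r * (Xv i - Xv (i + 1)) = Xv (i + 1) * (p - swapvars i p)"
proof -
  have single: "\<exists>r. r * (Xv i - Xv (i + 1)) = Xv (i + 1) * (Poly_Mapping.single m c - swapvars i (Poly_Mapping.single m c))" for m c
  proof -
    define K where "K = Suc (i + Max (insert 0 (Poly_Mapping.keys m)))"
    define u where "u = map (Poly_Mapping.lookup m) [0..<K]"
    have "mono u = m"
    proof (rule poly_mapping_eqI)
      fix k
      show "Poly_Mapping.lookup (mono u) k = Poly_Mapping.lookup m k"
      proof (cases "k < K")
        case True then show ?thesis by (simp add: lookup_mono u_def nth_default_def)
      next
        case False
        have "k \<notin> Poly_Mapping.keys m"
        proof
          assume "k \<in> Poly_Mapping.keys m"
          then have "k \<le> Max (insert 0 (Poly_Mapping.keys m))" by simp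
          with False show False by (simp add: K_def)
        qed
        then show ?thesis using False by (simp add: lookup_mono u_def nth_default_def in_keys_iff)
      qed
    qed
    moreover have "i < length u" by (simp add: u_def K_def)
    ultimately show ?thesis
      using ddiff_single_prop[OF assms, of u c] by metis
  qed
  have sum: "\<exists>r. r * (Xv i - Xv (i + 1)) = Xv (i + 1) * (sum f A - swapvars i (sum f A))"
    if "\<And>a. \<exists>r. r * (Xv i - Xv (i + 1)) = Xv (i + 1) * (f a - swapvars i (f a))" for f :: "_ \<Rightarrow> mpoly" and A
    using that
  proof (induction A rule: infinite_finite_induct)
    case (insert a A)
    obtain r1 where r1: "r1 * (Xv i - Xv (i + 1)) = Xv (i + 1) * (f a - swapvars i (f a))"
      using insert.prems by blast
    obtain r2 where r2: "r2 * (Xv i - Xv (i + 1)) = Xv (i + 1) * (sum f A - swapvars i (sum f A))"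
      using insert.IH insert.prems by blast
    show ?case
      by (rule exI[of _ "r1 + r2"]) (use insert.hyps r1 r2 in \<open>simp add: swapvars_add algebra_simps\<close>)
  qed auto
  show ?thesis
    by (subst (1 2) poly_expand) (rule sum, rule single)
qed

lemma ddiff_add:
  assumes "1 \<le> i"
  shows "ddiff i (p + q) = ddiff i p + ddiff i q"
proof -
  obtain r1 where r1: "r1 * (Xv i - Xv (i + 1)) = Xv (i + 1) * (p - swapvars i p)"
    using ddiff_exists[OF assms] by blast
  obtain r2 where r2: "r2 * (Xv i - Xv (i + 1)) = Xv (i + 1) * (q - swapvars i q)"
    using ddiff_exists[OF assms] by blast
  have "(r1 + r2) * (Xv i - Xv (i + 1)) = Xv (i + 1) * ((p + q) - swapvars i (p + q))"
    using r1 r2 by (simp add: swapvars_add algebra_simps)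
  then show ?thesis using ddiff_eq[OF assms] r1 r2 by metis
qed

lemma ddiff_zero: "1 \<le> i \<Longrightarrow> ddiff i 0 = 0"
  by (rule ddiff_eq) auto



lemma sum_take_nth: "k \<le> length xs \<Longrightarrow> sum_list (take k xs) = (\<Sum>i<k. xs ! i)"
  by (simp add: sum_list_sum_nth atLeast0LessThan min_def)

lemma dec_len[simp]: "length (dec_rearr u) = length u"
  by (simp add: dec_rearr_def)

lemma dec_mset[simp]: "mset (dec_rearr u) = mset u"
  by (simp add: dec_rearr_def)

lemma dec_eq_mset: "mset u = mset w \<Longrightarrow> dec_rearr u = dec_rearr w"
  unfolding dec_rearr_def by (metis properties_for_sort sorted_sort mset_sort)

lemma dec_eq_imp_mset: "dec_rearr u = dec_rearr w \<Longrightarrow> mset u = mset w"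
  by (metis dec_mset)

lemma dec_decreasing:
  assumes "i \<le> j" "j < length u"
  shows "dec_rearr u ! j \<le> dec_rearr u ! i"
proof -
  have s: "sorted (sort u)" by simp
  have "sort u ! (length u - Suc j) \<le> sort u ! (length u - Suc i)"
    by (rule sorted_nth_mono[OF s]) (use assms in auto)
  then show ?thesis using assms by (simp add: dec_rearr_def rev_nth)
qed

lemma dom_trans: "dom_le a b \<Longrightarrow> dom_le b c \<Longrightarrow> length a = length b \<Longrightarrow> dom_le a c"
  unfolding dom_le_def by (metis order_trans)

lemma dom_refl: "dom_le a a"
  unfolding dom_le_def by simp

lemma dom_antisym:
  assumes "dom_le a b" "dom_le b a" "length a = length b"
  shows "a = b"
proof (rule nth_equalityI)
  show "length a = length b" by fact
  fix k assume k: "k < length a"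
  have e: "sum_list (take i a) = sum_list (take i b)" if "i \<le> length a" for i
    using assms that unfolding dom_le_def by (metis antisym)
  have "sum_list (take (Suc k) a) = sum_list (take k a) + a ! k"
    using k by (simp add: take_Suc_conv_app_nth)
  moreover have "sum_list (take (Suc k) b) = sum_list (take k b) + b ! k"
    using k assms(3) by (simp add: take_Suc_conv_app_nth)
  ultimately show "a ! k = b ! k" using e[of k] e[of "Suc k"] k by simp
qed

lemma sum_le_card_bij:
  fixes f :: "nat \<Rightarrow> nat"
  assumes "finite A" "finite B" "card A = card B" "\<And>x y. x \<in> A \<Longrightarrow> y \<in> B \<Longrightarrow> f x \<le> f y"
  shows "sum f A \<le> sum f B"
proof -
  obtain h where h: "bij_betw h A B" using finite_same_card_bij[OF assms(1-3)] by blast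
  have "sum f A \<le> sum (f \<circ> h) A"
    by (rule sum_mono) (use h assms(4) in \<open>auto simp: bij_betw_def\<close>)
  also have "\<dots> = sum f B" using sum.reindex_bij_betw[OF h] by simp
  finally show ?thesis .
qed

lemma decreasing_topk:
  fixes d :: "nat list"
  assumes dec: "\<And>i j. i \<le> j \<Longrightarrow> j < length d \<Longrightarrow> d ! j \<le> d ! i"
    and J: "J \<subseteq> {..<length d}" "card J = k"
  shows "(\<Sum>i\<in>J. d ! i) \<le> (\<Sum>i<k. d ! i)"
proof -
  have fJ: "finite J" using J finite_subset by blast
  have kle: "k \<le> length d" using J card_mono[OF _ J(1)] by auto
  let ?K = "{..<k}"
  have c1: "card (J - ?K) = card (?K - J)"
  proof -
    have "card (J - ?K) = card J - card (J \<inter> ?K)"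
      by (metis Diff_Int2 card_Diff_subset_Int fJ finite_Int inf.idem)
    moreover have "card (?K - J) = card ?K - card (?K \<inter> J)"
      by (metis Diff_Int2 card_Diff_subset_Int finite_lessThan finite_Int inf.idem)
    ultimately show ?thesis using J by (simp add: Int_commute)
  qed
  have "(\<Sum>i\<in>J - ?K. d ! i) \<le> (\<Sum>i\<in>?K - J. d ! i)"
  proof (rule sum_le_card_bij)
    show "finite (J - ?K)" using fJ by simp
    show "finite (?K - J)" by simp
    show "card (J - ?K) = card (?K - J)" by (rule c1)
    fix x y assume "x \<in> J - ?K" "y \<in> ?K - J"
    then show "d ! x \<le> d ! y" using J(1) by (intro dec) auto
  qed
  then have "(\<Sum>i\<in>J - ?K. d ! i) + (\<Sum>i\<in>J \<inter> ?K. d ! i) \<le> (\<Sum>i\<in>?K - J. d ! i) + (\<Sum>i\<in>?K \<inter> J. d ! i)"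
    by (simp add: Int_commute)
  then show ?thesis
    by (metis fJ finite_lessThan sum.Int_Diff add.commute)
qed

lemma topk_upper:
  assumes "I \<subseteq> {..<length u}" "card I = k"
  shows "(\<Sum>i\<in>I. u ! i) \<le> sum_list (take k (dec_rearr u))"
proof -
  obtain \<pi> where \<pi>: "\<pi> permutes {..<length u}" "permute_list \<pi> u = dec_rearr u"
    using mset_eq_permutation[of "dec_rearr u" u] by auto
  have dn: "dec_rearr u ! m = u ! \<pi> m" if "m < length u" for m
    using \<pi> that by (metis permute_list_nth)
  define J where "J = {m \<in> {..<length u}. \<pi> m \<in> I}"
  have inj: "inj_on \<pi> J" using \<pi>(1) permutes_inj_on by blast
  have im: "\<pi> ` J = I"
  proof
    show "\<pi> ` J \<subseteq> I" by (auto simp: J_def)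
    show "I \<subseteq> \<pi> ` J"
    proof
      fix i assume i: "i \<in> I"
      then have "i \<in> {..<length u}" using assms by auto
      then obtain m where "m \<in> {..<length u}" "\<pi> m = i"
        using \<pi>(1) by (metis permutes_image image_iff)
      then show "i \<in> \<pi> ` J" using i by (auto simp: J_def)
    qed
  qed
  have "(\<Sum>i\<in>I. u ! i) = (\<Sum>m\<in>J. u ! \<pi> m)"
    using sum.reindex[OF inj, of "\<lambda>i. u ! i"] im by simp
  also have "\<dots> = (\<Sum>m\<in>J. dec_rearr u ! m)"
    by (rule sum.cong) (auto simp: J_def dn)
  also have "\<dots> \<le> (\<Sum>i<k. dec_rearr u ! i)"
  proof (rule decreasing_topk)
    show "\<And>i j. i \<le> j \<Longrightarrow> j < length (dec_rearr u) \<Longrightarrow> dec_rearr u ! j \<le> dec_rearr u ! i"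
      using dec_decreasing by simp
    show "J \<subseteq> {..<length (dec_rearr u)}" by (auto simp: J_def)
    show "card J = k" using card_image[OF inj] im assms by simp
  qed
  also have "\<dots> = sum_list (take k (dec_rearr u))"
  proof -
    have "k \<le> length u" using assms card_mono[OF _ assms(1)] by auto
    then show ?thesis by (simp add: sum_take_nth)
  qed
  finally show ?thesis .
qed

lemma topk_attained:
  assumes "k \<le> length u"
  shows "\<exists>I. I \<subseteq> {..<length u} \<and> card I = k \<and> (\<Sum>i\<in>I. u ! i) = sum_list (take k (dec_rearr u))"
proof -
  obtain \<pi> where \<pi>: "\<pi> permutes {..<length u}" "permute_list \<pi> u = dec_rearr u"
    using mset_eq_permutation[of "dec_rearr u" u] by auto
  have dn: "dec_rearr u ! m = u ! \<pi> m" if "m < length u" for m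
    using \<pi> that by (metis permute_list_nth)
  have inj: "inj_on \<pi> {..<k}" using \<pi>(1) permutes_inj_on by blast
  have sub: "\<pi> ` {..<k} \<subseteq> {..<length u}"
    using \<pi>(1) assms permutes_in_image by fastforce
  have "(\<Sum>i\<in>\<pi> ` {..<k}. u ! i) = (\<Sum>m<k. u ! \<pi> m)"
    using sum.reindex[OF inj, of "\<lambda>i. u ! i"] by simp
  also have "\<dots> = (\<Sum>m<k. dec_rearr u ! m)"
    by (rule sum.cong) (use assms dn in auto)
  also have "\<dots> = sum_list (take k (dec_rearr u))"
    using assms by (simp add: sum_take_nth)
  finally show ?thesis using sub card_image[OF inj] by auto
qed



lemma rh_transfer:
  fixes u w :: "nat list"
  assumes sp: "Suc p < length u" and w: "w = u[p := x, Suc p := y]"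
    and xy: "x + y = u ! p + u ! Suc p" "x \<le> max (u ! p) (u ! Suc p)" "y \<le> max (u ! p) (u ! Suc p)"
    and I: "I \<subseteq> {..<length u}"
  shows "\<exists>J. J \<subseteq> {..<length u} \<and> card J = card I \<and> (\<Sum>i\<in>I. w ! i) \<le> (\<Sum>i\<in>J. u ! i)"
proof -
  let ?P = "{p, Suc p}"
  have fI: "finite I" using I finite_subset by blast
  have wo: "w ! i = u ! i" if "i \<notin> ?P" for i using that w by auto
  have wp: "w ! p = x" "w ! Suc p = y" using w sp by auto
  have split: "(\<Sum>i\<in>I. f i) = (\<Sum>i\<in>I - ?P. f i) + (\<Sum>i\<in>I \<inter> ?P. f i)" for f :: "nat \<Rightarrow> nat"
    by (metis fI sum.Int_Diff add.commute)
  have restw: "(\<Sum>i\<in>I - ?P. w ! i) = (\<Sum>i\<in>I - ?P. u ! i)"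
    by (rule sum.cong) (auto simp: wo)
  consider (both) "p \<in> I" "Suc p \<in> I" | (none) "p \<notin> I" "Suc p \<notin> I"
    | (one) "(p \<in> I) \<noteq> (Suc p \<in> I)" by blast
  then show ?thesis
  proof cases
    case both
    then have "I \<inter> ?P = ?P" by auto
    then have "(\<Sum>i\<in>I \<inter> ?P. w ! i) = (\<Sum>i\<in>I \<inter> ?P. u ! i)" using wp xy by simp
    then show ?thesis using I split[of "\<lambda>i. w ! i"] split[of "\<lambda>i. u ! i"] restw by auto
  next
    case none
    then have "I \<inter> ?P = {}" by auto
    then show ?thesis using I split[of "\<lambda>i. w ! i"] split[of "\<lambda>i. u ! i"] restw by auto
  next
    case one
    define q where "q = (if u ! Suc p \<le> u ! p then p else Suc p)"
    define J where "J = insert q (I - ?P)"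
    have uq: "u ! q = max (u ! p) (u ! Suc p)" by (auto simp: q_def max_def)
    have qP: "q \<in> ?P" by (auto simp: q_def)
    have cI: "card I = Suc (card (I - ?P))"
    proof -
      obtain r where r: "I \<inter> ?P = {r}" using one by (cases "p \<in> I") auto
      have "card I = card (I - ?P) + card (I \<inter> ?P)"
        by (metis fI card_Int_Diff add.commute)
      then show ?thesis using r by simp
    qed
    have cJ: "card J = Suc (card (I - ?P))"
      unfolding J_def using fI qP by (subst card_insert_disjoint) auto
    have sJ: "(\<Sum>i\<in>J. u ! i) = u ! q + (\<Sum>i\<in>I - ?P. u ! i)"
      unfolding J_def using fI qP by (subst sum.insert) auto
    have "(\<Sum>i\<in>I \<inter> ?P. w ! i) \<le> max (u ! p) (u ! Suc p)"
    proof (cases "p \<in> I")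
      case True
      then have "I \<inter> ?P = {p}" using one by auto
      then show ?thesis using wp xy by simp
    next
      case False
      then have "I \<inter> ?P = {Suc p}" using one by auto
      then show ?thesis using wp xy by simp
    qed
    then have "(\<Sum>i\<in>I. w ! i) \<le> (\<Sum>i\<in>J. u ! i)"
      using split[of "\<lambda>i. w ! i"] restw sJ uq by simp
    moreover have "J \<subseteq> {..<length u}" using I sp qP unfolding J_def by auto
    ultimately show ?thesis using cI cJ by auto
  qed
qed

lemma rh_dom:
  fixes u w :: "nat list"
  assumes sp: "Suc p < length u" and w: "w = u[p := x, Suc p := y]"
    and xy: "x + y = u ! p + u ! Suc p" "x \<le> max (u ! p) (u ! Suc p)" "y \<le> max (u ! p) (u ! Suc p)"
  shows "dom_le (dec_rearr w) (dec_rearr u)"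
  unfolding dom_le_def
proof (intro allI impI)
  fix k assume k: "k \<le> length (dec_rearr w)"
  have lw: "length w = length u" using w by simp
  obtain I where I: "I \<subseteq> {..<length w}" "card I = k" "(\<Sum>i\<in>I. w ! i) = sum_list (take k (dec_rearr w))"
    using topk_attained[of k w] k by auto
  obtain J where J: "J \<subseteq> {..<length u}" "card J = card I" "(\<Sum>i\<in>I. w ! i) \<le> (\<Sum>i\<in>J. u ! i)"
    using rh_transfer[OF sp w xy, of I] I lw by auto
  have "(\<Sum>i\<in>J. u ! i) \<le> sum_list (take k (dec_rearr u))"
    using topk_upper[OF J(1)] J(2) I(2) by simp
  then show "sum_list (take k (dec_rearr w)) \<le> sum_list (take k (dec_rearr u))"
    using I J by simp
qed

lemma sum_sq_mset:
  fixes u w :: "nat list"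
  assumes "mset w = mset u"
  shows "(\<Sum>i<length w. (w ! i)^2) = (\<Sum>i<length u. (u ! i)^2)"
proof -
  have "(\<Sum>i<length w. (w ! i)^2) = sum_list (map (\<lambda>z. z^2) w)"
    by (simp add: sum_list_sum_nth atLeast0LessThan)
  also have "\<dots> = sum_mset (image_mset (\<lambda>z. z^2) (mset w))"
    by (simp add: sum_mset_sum_list[symmetric])
  also have "\<dots> = sum_mset (image_mset (\<lambda>z. z^2) (mset u))" using assms by simp
  also have "\<dots> = sum_list (map (\<lambda>z. z^2) u)"
    by (simp add: sum_mset_sum_list[symmetric])
  also have "\<dots> = (\<Sum>i<length u. (u ! i)^2)"
    by (simp add: sum_list_sum_nth atLeast0LessThan)
  finally show ?thesis .
qed

lemma rh_mset:
  fixes u w :: "nat list"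
  assumes sp: "Suc p < length u" and w: "w = u[p := x, Suc p := y]"
    and xy: "x + y = u ! p + u ! Suc p" "min (u ! p) (u ! Suc p) < x" "x < max (u ! p) (u ! Suc p)"
  shows "mset w \<noteq> mset u"
proof
  assume m: "mset w = mset u"
  let ?P = "{p, Suc p}"
  let ?n = "length u"
  have lw: "length w = ?n" using w by simp
  have s: "(\<Sum>i<?n. (w ! i)^2) = (\<Sum>i<?n. (u ! i)^2)" using sum_sq_mset[OF m] lw by simp
  have split: "(\<Sum>i<?n. f i) = (\<Sum>i\<in>{..<?n} - ?P. f i) + f p + f (Suc p)" for f :: "nat \<Rightarrow> nat"
  proof -
    have "(\<Sum>i<?n. f i) = (\<Sum>i\<in>{..<?n} - ?P. f i) + (\<Sum>i\<in>?P. f i)"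
      using sp by (subst sum.subset_diff[of ?P]) auto
    then show ?thesis by simp
  qed
  have rest: "(\<Sum>i\<in>{..<?n} - ?P. (w ! i)^2) = (\<Sum>i\<in>{..<?n} - ?P. (u ! i)^2)"
    by (rule sum.cong) (use w in auto)
  have wp: "w ! p = x" "w ! Suc p = y" using w sp by auto
  have eq: "x^2 + y^2 = (u ! p)^2 + (u ! Suc p)^2"
    using s split[of "\<lambda>i. (w ! i)^2"] split[of "\<lambda>i. (u ! i)^2"] rest wp by simp
  define a where "a = u ! p"
  define b where "b = u ! Suc p"
  have xy': "x + y = a + b" "min a b < x" "x < max a b" "x^2 + y^2 = a^2 + b^2"
    using xy eq by (auto simp: a_def b_def)
  have s1: "int x + int y = int a + int b" using xy'(1) by linarith
  have s2: "int x ^ 2 + int y ^ 2 = int a ^ 2 + int b ^ 2"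
    using xy'(4) by (metis of_nat_add of_nat_eq_iff of_nat_power)
  have "(int x + int y)^2 = (int a + int b)^2" using s1 by simp
  then have "int x ^ 2 + int y ^ 2 + 2 * int x * int y = int a ^ 2 + int b ^ 2 + 2 * int a * int b"
    by (simp only: power2_sum)
  then have "int x * int y = int a * int b" using s2 by linarith
  moreover have "int x * int y > int a * int b"
  proof -
    have yv: "int y = int a + int b - int x" using s1 by linarith
    have id: "int x * (int a + int b - int x) - int a * int b = (int x - int a) * (int b - int x)"
      by (simp add: algebra_simps)
    have "(int x - int a) * (int b - int x) > 0"
    proof (cases "a < b")
      case True
      then have "a < x" "x < b" using xy'(2,3) by (auto simp: min_def max_def)
      then show ?thesis by (intro mult_pos_pos) auto
    next
      case False
      then have "b < x" "x < a" using xy'(2,3) by (auto simp: min_def max_def split: if_splits)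
      then show ?thesis by (intro mult_neg_neg) auto
    qed
    then show ?thesis using id unfolding yv[symmetric] by linarith
  qed
  ultimately show False by simp
qed



lemma single_sum: "(\<Sum>x\<in>A. Poly_Mapping.single m (f x)) = Poly_Mapping.single m (\<Sum>x\<in>A. f x)"
  by (induction A rule: infinite_finite_induct) (auto simp: single_add)

lemma vecT_lin:
  "vecT lam N i (\<lambda>U. \<Sum>w\<in>A. c w * x w U) = (\<lambda>U. \<Sum>w\<in>A. c w * vecT lam N i (x w) U)"
  unfolding vecT_def
  by (rule ext) (simp add: sum_distrib_right sum_distrib_left mult.assoc sum.swap[of _ A])

lemma vecT_add: "vecT lam N i (\<lambda>U. a U + b U) = (\<lambda>U. vecT lam N i a U + vecT lam N i b U)"
  unfolding vecT_def by (simp add: distrib_right sum.distrib)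

lemma vecT_smult: "vecT lam N i (\<lambda>U. c * a U) = (\<lambda>U. c * vecT lam N i a U)"
  unfolding vecT_def by (simp add: sum_distrib_left mult.assoc)

lemma vecT_zero: "vecT lam N i (\<lambda>U. 0) = (\<lambda>U. 0)"
  unfolding vecT_def by simp

lemma vec_word_append: "vec_word lam N (w @ [i]) u = vecT lam N i (vec_word lam N w u)"
  by (simp add: vec_word_def)

lemma hact_superset:
  assumes "finite A" "Poly_Mapping.keys h \<subseteq> A"
  shows "hact lam N u h = (\<lambda>U. \<Sum>w\<in>A. Poly_Mapping.lookup h w * vec_word lam N w u U)"
  unfolding hact_def
  by (rule ext, rule sum.mono_neutral_left) (use assms in \<open>auto simp: in_keys_iff\<close>)


definition Span :: "nat list \<Rightarrow> nat \<Rightarrow> tab \<Rightarrow> vec set" where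
  "Span lam N T0 = {a. \<exists>h. is_hecke N h \<and> a = hact lam N (basis T0) h}"

lemma span_zero: "(\<lambda>U. 0) \<in> Span lam N T0"
  unfolding Span_def
  by (rule CollectI, rule exI[of _ 0]) (simp add: is_hecke_def hact_def)

lemma span_basis: "basis T0 \<in> Span lam N T0"
proof -
  define h' :: hecke where "h' = Poly_Mapping.single [] 1"
  have "hact lam N (basis T0) (Poly_Mapping.single [] 1) = (\<lambda>U. \<Sum>w\<in>{[]}. Poly_Mapping.lookup (Poly_Mapping.single [] (1::K)) w * vec_word lam N w (basis T0) U)"
    by (rule hact_superset) auto
  then have "hact lam N (basis T0) (Poly_Mapping.single [] 1) = basis T0"
    by (simp add: vec_word_def)
  moreover have "is_hecke N (Poly_Mapping.single [] 1)" by (simp add: is_hecke_def)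
  ultimately have "hact lam N (basis T0) h' = basis T0" "is_hecke N h'" by (simp_all add: h'_def)
  then show ?thesis unfolding Span_def by (intro CollectI exI[where x = h'] conjI) auto
qed

lemma span_add:
  assumes "a \<in> Span lam N T0" "b \<in> Span lam N T0"
  shows "(\<lambda>U. a U + b U) \<in> Span lam N T0"
proof -
  obtain h1 where h1: "is_hecke N h1" "a = hact lam N (basis T0) h1" using assms(1) by (auto simp: Span_def)
  obtain h2 where h2: "is_hecke N h2" "b = hact lam N (basis T0) h2" using assms(2) by (auto simp: Span_def)
  let ?A = "Poly_Mapping.keys h1 \<union> Poly_Mapping.keys h2"
  have k: "Poly_Mapping.keys (h1 + h2) \<subseteq> ?A" by (rule keys_add)
  have e1: "hact lam N (basis T0) (h1 + h2) = (\<lambda>U. \<Sum>w\<in>?A. Poly_Mapping.lookup (h1 + h2) w * vec_word lam N w (basis T0) U)"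
    by (rule hact_superset[OF _ k]) simp
  have e2: "hact lam N (basis T0) h1 = (\<lambda>U. \<Sum>w\<in>?A. Poly_Mapping.lookup h1 w * vec_word lam N w (basis T0) U)"
    by (rule hact_superset) auto
  have e3: "hact lam N (basis T0) h2 = (\<lambda>U. \<Sum>w\<in>?A. Poly_Mapping.lookup h2 w * vec_word lam N w (basis T0) U)"
    by (rule hact_superset) auto
  have "hact lam N (basis T0) (h1 + h2) = (\<lambda>U. a U + b U)"
    unfolding h1(2) h2(2) e1 e2 e3
    by (simp add: lookup_add distrib_right sum.distrib)
  moreover have "is_hecke N (h1 + h2)"
    using h1(1) h2(1) keys_add[of h1 h2] unfolding is_hecke_def by blast
  ultimately show ?thesis unfolding Span_def by (intro CollectI exI[where x = "h1 + h2"] conjI) auto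
qed

lemma span_smult:
  assumes "a \<in> Span lam N T0"
  shows "(\<lambda>U. c * a U) \<in> Span lam N T0"
proof -
  obtain h where h: "is_hecke N h" "a = hact lam N (basis T0) h" using assms by (auto simp: Span_def)
  define h' where "h' = Poly_Mapping.mapp (\<lambda>_ z. c * z) h"
  have lk: "Poly_Mapping.lookup h' w = c * Poly_Mapping.lookup h w" for w
    by (simp add: h'_def lookup_mapp when_def in_keys_iff)
  have ks: "Poly_Mapping.keys h' \<subseteq> Poly_Mapping.keys h" unfolding h'_def by (rule keys_mapp_subset)
  have "hact lam N (basis T0) h' = (\<lambda>U. c * a U)"
    unfolding h(2)
    by (subst (1 2) hact_superset[where A = "Poly_Mapping.keys h"])
       (use ks in \<open>auto simp: lk sum_distrib_left mult.assoc\<close>)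
  moreover have "is_hecke N h'" using h(1) ks unfolding is_hecke_def by blast
  ultimately show ?thesis unfolding Span_def by (intro CollectI exI[where x = h'] conjI) auto
qed

lemma span_sum:
  assumes "\<And>x. x \<in> A \<Longrightarrow> F x \<in> Span lam N T0"
  shows "(\<lambda>U. \<Sum>x\<in>A. F x U) \<in> Span lam N T0"
  using assms
proof (induction A rule: infinite_finite_induct)
  case (infinite A) then show ?case using span_zero by simp
next
  case empty then show ?case using span_zero by simp
next
  case (insert x A)
  have "(\<lambda>U. F x U + (\<Sum>x\<in>A. F x U)) \<in> Span lam N T0"
    by (rule span_add) (use insert in auto)
  then show ?case using insert.hyps by simp
qed

lemma span_vecT:
  assumes "a \<in> Span lam N T0" "1 \<le> i" "i < N"
  shows "vecT lam N i a \<in> Span lam N T0"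
proof -
  obtain h where h: "is_hecke N h" "a = hact lam N (basis T0) h" using assms by (auto simp: Span_def)
  define h' where "h' = (\<Sum>w\<in>Poly_Mapping.keys h. Poly_Mapping.single (w @ [i]) (Poly_Mapping.lookup h w))"
  have inj: "inj_on (\<lambda>w. w @ [i]) (Poly_Mapping.keys h)" by (auto simp: inj_on_def)
  have ks: "Poly_Mapping.keys h' \<subseteq> (\<lambda>w. w @ [i]) ` Poly_Mapping.keys h"
  proof -
    have "Poly_Mapping.keys h' \<subseteq> (\<Union>w\<in>Poly_Mapping.keys h. Poly_Mapping.keys (Poly_Mapping.single (w @ [i]) (Poly_Mapping.lookup h w)))"
      unfolding h'_def by (rule keys_sum)
    also have "\<dots> \<subseteq> (\<lambda>w. w @ [i]) ` Poly_Mapping.keys h" by auto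
    finally show ?thesis .
  qed
  have lk: "Poly_Mapping.lookup h' (w @ [i]) = Poly_Mapping.lookup h w" if "w \<in> Poly_Mapping.keys h" for w
  proof -
    have "Poly_Mapping.lookup h' (w @ [i]) = (\<Sum>w'\<in>Poly_Mapping.keys h. (Poly_Mapping.lookup h w' when w' @ [i] = w @ [i]))"
      by (simp add: h'_def lookup_sum lookup_single)
    also have "\<dots> = (\<Sum>w'\<in>Poly_Mapping.keys h. (if w' = w then Poly_Mapping.lookup h w' else 0))"
      by (rule sum.cong) (auto simp: when_def)
    also have "\<dots> = Poly_Mapping.lookup h w" using that by simp
    finally show ?thesis .
  qed
  have "hact lam N (basis T0) h' = (\<lambda>U. \<Sum>w'\<in>(\<lambda>w. w @ [i]) ` Poly_Mapping.keys h. Poly_Mapping.lookup h' w' * vec_word lam N w' (basis T0) U)"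
    by (rule hact_superset) (use ks in auto)
  also have "\<dots> = (\<lambda>U. \<Sum>w\<in>Poly_Mapping.keys h. Poly_Mapping.lookup h w * vecT lam N i (vec_word lam N w (basis T0)) U)"
    by (subst sum.reindex[OF inj]) (auto simp: lk vec_word_append)
  also have "\<dots> = vecT lam N i a"
    unfolding h(2) hact_def vecT_lin ..
  finally have "hact lam N (basis T0) h' = vecT lam N i a" .
  moreover have "is_hecke N h'" unfolding is_hecke_def
  proof
    fix w' assume "w' \<in> Poly_Mapping.keys h'"
    then obtain w where "w \<in> Poly_Mapping.keys h" "w' = w @ [i]" using ks by blast
    then show "set w' \<subseteq> {1..<N}" using h(1) assms(2,3) unfolding is_hecke_def by auto
  qed
  ultimately show ?thesis unfolding Span_def by (intro CollectI exI[where x = h'] conjI) auto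
qed

lemma span_word:
  assumes "a \<in> Span lam N T0" "set w \<subseteq> {1..<N}"
  shows "vec_word lam N w a \<in> Span lam N T0"
  using assms
proof (induction w arbitrary: a)
  case Nil then show ?case by (simp add: vec_word_def)
next
  case (Cons i w)
  have "vec_word lam N (i # w) a = vec_word lam N w (vecT lam N i a)" by (simp add: vec_word_def)
  moreover have "vecT lam N i a \<in> Span lam N T0"
    using Cons.prems by (intro span_vecT) auto
  ultimately show ?case using Cons by auto
qed




definition MLin :: "nat list \<Rightarrow> nat \<Rightarrow> (vec \<Rightarrow> vec) \<Rightarrow> bool" where
  "MLin lam N g \<longleftrightarrow> (\<forall>a U. g a U = (\<Sum>T\<in>Tab lam N. a T * g (basis T) U))"

lemma finite_cells: "finite (cells lam)"
proof -
  have "cells lam \<subseteq> {..<length lam} \<times> {..<sum_list lam}"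
    unfolding cells_def
  proof (clarsimp)
    fix r c assume "r < length lam" "c < lam ! r"
    then show "c < sum_list lam" using elem_le_sum_list[of r lam] by simp
  qed
  then show ?thesis by (rule finite_subset) simp
qed

lemma finite_Tab: "finite (Tab lam N)"
proof -
  have "Tab lam N \<subseteq> {L. set L \<subseteq> cells lam \<and> length L = N}" unfolding Tab_def by auto
  then show ?thesis by (rule finite_subset) (simp add: finite_lists_length_eq finite_cells)
qed

lemma vecT_basis: "T \<in> Tab lam N \<Longrightarrow> vecT lam N i (basis T) U = coefT i T U"
proof -
  assume T: "T \<in> Tab lam N"
  have "vecT lam N i (basis T) U = (\<Sum>T'\<in>Tab lam N. (if T' = T then coefT i T' U else 0))"
    unfolding vecT_def basis_def by (rule sum.cong) auto
  also have "\<dots> = coefT i T U" using T finite_Tab by simp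
  finally show ?thesis .
qed

lemma MLin_vecT: "MLin lam N (vecT lam N i)"
  unfolding MLin_def
proof (intro allI)
  fix a U
  show "vecT lam N i a U = (\<Sum>T\<in>Tab lam N. a T * vecT lam N i (basis T) U)"
    unfolding vecT_def[of lam N i a] by (rule sum.cong) (auto simp: vecT_basis)
qed

lemma MLin_comp:
  assumes "MLin lam N g" "MLin lam N h"
  shows "MLin lam N (\<lambda>a. h (g a))"
  unfolding MLin_def
proof (intro allI)
  fix a U
  have G: "\<And>b V. g b V = (\<Sum>T\<in>Tab lam N. b T * g (basis T) V)"
    using assms(1) unfolding MLin_def by blast
  have H: "\<And>b V. h b V = (\<Sum>T\<in>Tab lam N. b T * h (basis T) V)"
    using assms(2) unfolding MLin_def by blast
  have "h (g a) U = (\<Sum>T'\<in>Tab lam N. g a T' * h (basis T') U)" by (rule H)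
  also have "\<dots> = (\<Sum>T'\<in>Tab lam N. (\<Sum>T\<in>Tab lam N. a T * g (basis T) T') * h (basis T') U)"
    by (rule sum.cong[OF refl]) (subst G, rule refl)
  also have "\<dots> = (\<Sum>T'\<in>Tab lam N. \<Sum>T\<in>Tab lam N. a T * (g (basis T) T' * h (basis T') U))"
    by (simp add: sum_distrib_right mult.assoc)
  also have "\<dots> = (\<Sum>T\<in>Tab lam N. \<Sum>T'\<in>Tab lam N. a T * (g (basis T) T' * h (basis T') U))"
    by (rule sum.swap)
  also have "\<dots> = (\<Sum>T\<in>Tab lam N. a T * (\<Sum>T'\<in>Tab lam N. g (basis T) T' * h (basis T') U))"
    by (simp add: sum_distrib_left)
  also have "\<dots> = (\<Sum>T\<in>Tab lam N. a T * h (g (basis T)) U)"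
    by (rule sum.cong[OF refl]) (subst (2) H, rule refl)
  finally show "h (g a) U = (\<Sum>T\<in>Tab lam N. a T * h (g (basis T)) U)" .
qed

lemma MLin_word_aux: "MLin lam N g \<Longrightarrow> MLin lam N (\<lambda>a. vec_word lam N w (g a))"
proof (induction w arbitrary: g)
  case Nil then show ?case by (simp add: vec_word_def)
next
  case (Cons i w)
  have "MLin lam N (\<lambda>a. vecT lam N i (g a))" by (rule MLin_comp[OF Cons.prems MLin_vecT])
  from Cons.IH[OF this] show ?case by (simp add: vec_word_def)
qed

lemma MLin_word: "MLin lam N (vec_word lam N (i # w))"
proof -
  have "MLin lam N (\<lambda>a. vec_word lam N w (vecT lam N i a))" by (rule MLin_word_aux[OF MLin_vecT])
  moreover have "vec_word lam N (i # w) = (\<lambda>a. vec_word lam N w (vecT lam N i a))"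
    by (rule ext) (simp add: vec_word_def)
  ultimately show ?thesis by simp
qed

lemma mlin_tensor:
  assumes phi: "\<And>c. \<phi> (Poly_Mapping.single (mono u) c) = Poly_Mapping.single (mono u') (c * \<kappa>)"
    and g: "MLin lam N g"
  shows "mlin lam N \<phi> g (tensor u a) = tensor u' (\<lambda>U. \<kappa> * g a U)"
proof (rule ext)
  fix U
  have "mlin lam N \<phi> g (tensor u a) U
      = (\<Sum>T\<in>Tab lam N. Poly_Mapping.single (mono u') (\<kappa> * (a T * g (basis T) U)))"
    unfolding mlin_def tensor_def phi
    by (rule sum.cong) (simp_all add: const_single mult.commute mult.left_commute mult.assoc)
  also have "\<dots> = Poly_Mapping.single (mono u') (\<kappa> * (\<Sum>T\<in>Tab lam N. a T * g (basis T) U))"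
    by (simp add: single_sum sum_distrib_left)
  also have "\<dots> = tensor u' (\<lambda>U. \<kappa> * g a U) U"
    using g unfolding MLin_def tensor_def by metis
  finally show "mlin lam N \<phi> g (tensor u a) U = tensor u' (\<lambda>U. \<kappa> * g a U) U" .
qed

definition Iset :: "nat list \<Rightarrow> nat \<Rightarrow> nat set" where
  "Iset u p = (if u ! Suc p < u ! p then {u ! Suc p..<u ! p} else {u ! p..<u ! Suc p})"

definition eps :: "nat list \<Rightarrow> nat \<Rightarrow> K" where
  "eps u p = (if u ! Suc p < u ! p then 1 else -1)"

lemma const_neg_one: "const (-1) = -1"
  by (simp add: const_def single_uminus)

lemma Dsum_alt: "Dsum u p = const (eps u p) * (\<Sum>x\<in>Iset u p. mon (dupd u p x))"
  by (simp add: Dsum_def eps_def Iset_def const_neg_one)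

lemma opT_tensor:
  assumes "1 \<le> i" "i < length u"
  shows "opT lam N i (tensor u a) = (\<lambda>U. (\<Sum>x\<in>Iset u (i - 1). tensor (dupd u (i - 1) x) (\<lambda>U. eps u (i - 1) * (1 - s_par) * a U) U)
                + tensor (swl (i - 1) u) (vecT lam N i a) U)"
proof -
  have m: "mlin lam N (swapvars i) (vecT lam N i) (tensor u a) = tensor (swl (i - 1) u) (\<lambda>U. 1 * vecT lam N i a U)"
    by (rule mlin_tensor[OF _ MLin_vecT]) (simp add: swapvars_single[OF assms])
  have d: "const (1 - s_par) * ddiff i (tensor u a U)
     = (\<Sum>x\<in>Iset u (i - 1). tensor (dupd u (i - 1) x) (\<lambda>U. eps u (i - 1) * (1 - s_par) * a U) U)" for U
    unfolding tensor_def ddiff_single[OF assms] Dsum_alt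
    by (simp add: sum_distrib_left mon_def const_single mult.assoc mult.left_commute
        flip: const_mult) (simp_all add: mult_ac)
  show ?thesis unfolding opT_def d m by simp
qed



inductive good :: "nat list \<Rightarrow> nat \<Rightarrow> tab \<Rightarrow> (nat list \<Rightarrow> bool) \<Rightarrow> modl \<Rightarrow> bool"
  for lam N T0 P where
  g0: "good lam N T0 P (\<lambda>U. 0)"
| g1: "P u \<Longrightarrow> length u = N \<Longrightarrow> a \<in> Span lam N T0 \<Longrightarrow> good lam N T0 P (tensor u a)"
| g2: "good lam N T0 P f \<Longrightarrow> good lam N T0 P g \<Longrightarrow> good lam N T0 P (\<lambda>U. f U + g U)"

lemma good_sum:
  assumes "\<And>x. x \<in> A \<Longrightarrow> good lam N T0 P (F x)"
  shows "good lam N T0 P (\<lambda>U. \<Sum>x\<in>A. F x U)"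
  using assms
proof (induction A rule: infinite_finite_induct)
  case (infinite A) then show ?case by (simp add: g0)
next
  case empty then show ?case by (simp add: g0)
next
  case (insert x A)
  have "good lam N T0 P (\<lambda>U. F x U + (\<Sum>x\<in>A. F x U))"
    by (rule g2) (use insert in auto)
  then show ?case using insert.hyps by simp
qed

lemma good_mono:
  assumes "good lam N T0 P f" "\<And>u. P u \<Longrightarrow> length u = N \<Longrightarrow> Q u"
  shows "good lam N T0 Q f"
  using assms(1) by induction (auto intro: good.intros assms(2))

lemma good_lift:
  assumes add: "\<And>f g. op (\<lambda>U. f U + g U) = (\<lambda>U. op f U + op g U)"
    and zero: "op (\<lambda>U. 0) = (\<lambda>U. 0)"
    and tm: "\<And>u a. P u \<Longrightarrow> length u = N \<Longrightarrow> a \<in> Span lam N T0 \<Longrightarrow> good lam N T0 Q (op (tensor u a))"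
    and f: "good lam N T0 P f"
  shows "good lam N T0 Q (op f)"
  using f
proof induction
  case g0 then show ?case by (simp add: zero good.g0)
next
  case (g1 u a) then show ?case by (rule tm)
next
  case (g2 f g) then show ?case by (simp add: add good.g2)
qed

lemma tensor_add: "tensor u (\<lambda>U. a U + b U) = (\<lambda>U. tensor u a U + tensor u b U)"
  by (simp add: tensor_def single_add)

lemma const_tensor: "const c * tensor u a U = tensor u (\<lambda>U. c * a U) U"
  by (simp add: tensor_def const_single)

lemma good_smult:
  assumes "good lam N T0 P f"
  shows "good lam N T0 P (\<lambda>U. const c * f U)"
proof -
  define op :: "modl \<Rightarrow> modl" where "op = (\<lambda>f U. const c * f U)"
  have "good lam N T0 P (op f)"
  proof (rule good_lift[where op = op and P = P])
    show "op (\<lambda>U. f U + g U) = (\<lambda>U. op f U + op g U)" for f g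
      by (simp add: op_def distrib_left)
    show "op (\<lambda>U. 0) = (\<lambda>U. 0)" by (simp add: op_def)
    fix u a assume "P u" "length u = N" "a \<in> Span lam N T0"
    then show "good lam N T0 P (op (tensor u a))"
      unfolding op_def const_tensor by (intro g1 span_smult) auto
  qed (rule assms)
  then show ?thesis by (simp add: op_def)
qed

lemma mlin_add:
  assumes "\<And>p q. \<phi> (p + q) = \<phi> p + \<phi> q"
  shows "mlin lam N \<phi> g (\<lambda>U. f U + h U) = (\<lambda>U. mlin lam N \<phi> g f U + mlin lam N \<phi> g h U)"
  unfolding mlin_def by (simp add: assms distrib_right sum.distrib)

lemma mlin_zero:
  assumes "\<phi> 0 = 0"
  shows "mlin lam N \<phi> g (\<lambda>U. 0) = (\<lambda>U. 0)"
  unfolding mlin_def by (simp add: assms)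

lemma opT_add: "1 \<le> i \<Longrightarrow> opT lam N i (\<lambda>U. f U + g U) = (\<lambda>U. opT lam N i f U + opT lam N i g U)"
  unfolding opT_def mlin_add[of "swapvars i", OF swapvars_add]
  by (simp add: ddiff_add distrib_left add_ac)

lemma opT_zero: "1 \<le> i \<Longrightarrow> opT lam N i (\<lambda>U. 0) = (\<lambda>U. 0)"
  unfolding opT_def mlin_zero[of "swapvars i", OF swapvars_zero]
  by (simp add: ddiff_zero)

lemma opTinv_add: "1 \<le> i \<Longrightarrow> opTinv lam N i (\<lambda>U. f U + g U) = (\<lambda>U. opTinv lam N i f U + opTinv lam N i g U)"
  unfolding opTinv_def by (simp add: opT_add algebra_simps)

lemma opTinv_zero: "1 \<le> i \<Longrightarrow> opTinv lam N i (\<lambda>U. 0) = (\<lambda>U. 0)"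
  unfolding opTinv_def by (simp add: opT_zero)

lemma wsubst_add: "wsubst N (p + q) = wsubst N p + wsubst N q"
  unfolding wsubst_def by (rule psubst_add)

lemma opW_add: "opW lam N (\<lambda>U. f U + g U) = (\<lambda>U. opW lam N f U + opW lam N g U)"
  unfolding opW_def by (rule mlin_add[OF wsubst_add])

lemma opW_zero: "opW lam N (\<lambda>U. 0) = (\<lambda>U. 0)"
  unfolding opW_def by (rule mlin_zero) (simp add: wsubst_def)

definition RH :: "nat list \<Rightarrow> nat list \<Rightarrow> bool" where
  "RH u w \<longleftrightarrow> dom_le (dec_rearr w) (dec_rearr u) \<and> mset w \<noteq> mset u"

lemma dupd_RH:
  assumes "Suc p < length u" "min (u ! p) (u ! Suc p) < x" "x < max (u ! p) (u ! Suc p)"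
  shows "RH u (dupd u p x)"
proof -
  define y where "y = u ! p + u ! Suc p - x"
  have w: "dupd u p x = u[p := x, Suc p := y]" by (simp add: dupd_def y_def)
  have xy: "x + y = u ! p + u ! Suc p" "x \<le> max (u ! p) (u ! Suc p)" "y \<le> max (u ! p) (u ! Suc p)"
    using assms(2,3) by (auto simp: y_def min_def max_def split: if_splits)
  show ?thesis unfolding RH_def
    using rh_dom[OF assms(1) w xy] rh_mset[OF assms(1) w xy(1) assms(2,3)] by simp
qed

lemma dupd_class:
  assumes "Suc p < length u" "x \<in> Iset u p"
  shows "dupd u p x = swl p u \<or> (dupd u p x = u \<and> u ! p \<le> u ! Suc p) \<or> RH u (dupd u p x)"
proof (cases "u ! Suc p < u ! p")
  case True
  then have x: "u ! Suc p \<le> x" "x < u ! p" using assms(2) by (auto simp: Iset_def)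
  show ?thesis
  proof (cases "x = u ! Suc p")
    case True
    then have "dupd u p x = swl p u" by (simp add: dupd_def swl_def)
    then show ?thesis by simp
  next
    case False
    then have "RH u (dupd u p x)" using x True by (intro dupd_RH[OF assms(1)]) auto
    then show ?thesis by simp
  qed
next
  case False
  then have x: "u ! p \<le> x" "x < u ! Suc p" using assms(2) by (auto simp: Iset_def)
  show ?thesis
  proof (cases "x = u ! p")
    case True
    then have "dupd u p x = u" by (simp add: dupd_def)
    then show ?thesis using x by simp
  next
    case False
    then have "RH u (dupd u p x)" using x by (intro dupd_RH[OF assms(1)]) auto
    then show ?thesis by simp
  qed
qed

lemma len_dupd[simp]: "length (dupd u p x) = length u" by (simp add: dupd_def)
lemma len_swl[simp]: "length (swl p u) = length u" by (simp add: swl_def)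
lemma len_rot[simp]: "u \<noteq> [] \<Longrightarrow> length (rot u) = length u" by (simp add: rot_def)

lemma opT_term:
  assumes "1 \<le> i" "i < N" "length u = N" "a \<in> Span lam N T0"
  shows "good lam N T0 (\<lambda>w. w = swl (i - 1) u \<or> (w = u \<and> u ! (i - 1) \<le> u ! i) \<or> RH u w)
            (opT lam N i (tensor u a))"
proof -
  have il: "1 \<le> i" "i < length u" using assms by auto
  have sp: "Suc (i - 1) < length u" using assms by auto
  have si: "Suc (i - 1) = i" using assms by simp
  show ?thesis
    unfolding opT_tensor[OF il]
  proof (rule g2)
    show "good lam N T0 (\<lambda>w. w = swl (i - 1) u \<or> (w = u \<and> u ! (i - 1) \<le> u ! i) \<or> RH u w)
        (\<lambda>U. \<Sum>x\<in>Iset u (i - 1). tensor (dupd u (i - 1) x) (\<lambda>U. eps u (i - 1) * (1 - s_par) * a U) U)"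
    proof (rule good_sum)
      fix x assume x: "x \<in> Iset u (i - 1)"
      show "good lam N T0 (\<lambda>w. w = swl (i - 1) u \<or> (w = u \<and> u ! (i - 1) \<le> u ! i) \<or> RH u w)
          (tensor (dupd u (i - 1) x) (\<lambda>U. eps u (i - 1) * (1 - s_par) * a U))"
        using dupd_class[OF sp x] assms(3,4) si by (intro g1 span_smult) auto
    qed
    show "good lam N T0 (\<lambda>w. w = swl (i - 1) u \<or> (w = u \<and> u ! (i - 1) \<le> u ! i) \<or> RH u w)
        (tensor (swl (i - 1) u) (vecT lam N i a))"
      using assms by (intro g1 span_vecT) auto
  qed
qed



lemma opTinv_term:
  assumes "1 \<le> i" "i < N" "length u = N" "a \<in> Span lam N T0"
  shows "good lam N T0 (\<lambda>w. w = swl (i - 1) u \<or> (w = u \<and> u ! i \<le> u ! (i - 1)) \<or> RH u w)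
            (opTinv lam N i (tensor u a))"
proof -
  define Q where "Q = (\<lambda>w. w = swl (i - 1) u \<or> (w = u \<and> u ! i \<le> u ! (i - 1)) \<or> RH u w)"
  have il: "1 \<le> i" "i < length u" using assms by auto
  have sp: "Suc (i - 1) < length u" using assms by auto
  have si: "Suc (i - 1) = i" using assms by simp
  have uf: "opTinv lam N i (tensor u a) = (\<lambda>U. const (inverse s_par) *
        (opT lam N i (tensor u a) U + tensor u (\<lambda>U. (1 - s_par) * a U) U))"
    unfolding opTinv_def const_tensor ..
  show ?thesis
  proof (cases "u ! (i - 1) < u ! i")
    case False
    have "good lam N T0 Q (opT lam N i (tensor u a))"
      by (rule good_mono[OF opT_term[OF assms]]) (use False in \<open>auto simp: Q_def\<close>)
    moreover have "good lam N T0 Q (tensor u (\<lambda>U. (1 - s_par) * a U))"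
      using False assms by (intro g1 span_smult) (auto simp: Q_def)
    ultimately have "good lam N T0 Q (\<lambda>U. opT lam N i (tensor u a) U + tensor u (\<lambda>U. (1 - s_par) * a U) U)"
      by (rule g2)
    then show ?thesis unfolding uf Q_def[symmetric] by (rule good_smult)
  next
    case True
    define p where "p = i - 1"
    have sp': "Suc p < length u" and si': "Suc p = i" using sp si by (auto simp: p_def)
    have T': "u ! p < u ! Suc p" using True si' by (simp add: p_def)
    have Is: "Iset u p = {u ! p..<u ! Suc p}" and ep: "eps u p = -1"
      using T' by (auto simp: Iset_def eps_def)
    define F where "F x = tensor (dupd u p x) (\<lambda>U. eps u p * (1 - s_par) * a U)" for x
    have Fa: "F (u ! p) U + tensor u (\<lambda>U. (1 - s_par) * a U) U = 0" for U
    proof -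
      have "dupd u p (u ! p) = u" by (simp add: dupd_def)
      moreover have "(s_par - 1) * a U + (1 - s_par) * a U = 0" by (simp add: algebra_simps)
      ultimately show ?thesis unfolding F_def ep tensor_def
        by (simp flip: single_add)
    qed
    have split: "(\<Sum>x\<in>Iset u p. F x U) = F (u ! p) U + (\<Sum>x\<in>{Suc (u ! p)..<u ! Suc p}. F x U)" for U
      unfolding Is by (rule sum.atLeast_Suc_lessThan[OF T'])
    have e: "opTinv lam N i (tensor u a) = (\<lambda>U. const (inverse s_par) *
        ((\<Sum>x\<in>{Suc (u ! p)..<u ! Suc p}. F x U) + tensor (swl p u) (vecT lam N i a) U))"
    proof (rule ext)
      fix U
      have "opT lam N i (tensor u a) U + tensor u (\<lambda>U. (1 - s_par) * a U) U
          = (\<Sum>x\<in>Iset u p. F x U) + tensor (swl p u) (vecT lam N i a) U + tensor u (\<lambda>U. (1 - s_par) * a U) U"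
        unfolding opT_tensor[OF il] F_def p_def by simp
      also have "\<dots> = (F (u ! p) U + tensor u (\<lambda>U. (1 - s_par) * a U) U) + (\<Sum>x\<in>{Suc (u ! p)..<u ! Suc p}. F x U)
           + tensor (swl p u) (vecT lam N i a) U"
        unfolding split by (simp add: add_ac)
      also have "\<dots> = (\<Sum>x\<in>{Suc (u ! p)..<u ! Suc p}. F x U) + tensor (swl p u) (vecT lam N i a) U"
        unfolding Fa by simp
      finally show "opTinv lam N i (tensor u a) U = const (inverse s_par) *
        ((\<Sum>x\<in>{Suc (u ! p)..<u ! Suc p}. F x U) + tensor (swl p u) (vecT lam N i a) U)"
        unfolding uf by simp
    qed
    have "good lam N T0 Q (\<lambda>U. (\<Sum>x\<in>{Suc (u ! p)..<u ! Suc p}. F x U) + tensor (swl p u) (vecT lam N i a) U)"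
    proof (rule g2)
      show "good lam N T0 Q (\<lambda>U. \<Sum>x\<in>{Suc (u ! p)..<u ! Suc p}. F x U)"
      proof (rule good_sum)
        fix x assume x: "x \<in> {Suc (u ! p)..<u ! Suc p}"
        have "RH u (dupd u p x)"
          using x True by (intro dupd_RH[OF sp']) (auto simp: p_def si)
        then show "good lam N T0 Q (F x)"
          unfolding F_def using assms by (intro g1 span_smult) (auto simp: Q_def)
      qed
      show "good lam N T0 Q (tensor (swl p u) (vecT lam N i a))"
        using assms by (intro g1 span_vecT) (auto simp: Q_def p_def)
    qed
    then show ?thesis unfolding e Q_def[symmetric] by (rule good_smult)
  qed
qed

lemma opW_term:
  assumes "2 \<le> N" "length u = N" "a \<in> Span lam N T0"
  shows "good lam N T0 (\<lambda>w. w = rot u) (opW lam N (tensor u a))"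
proof -
  have up: "[1..<N] = 1 # [Suc 1..<N]" using assms(1) by (intro upt_conv_Cons) simp
  have "opW lam N (tensor u a) = tensor (rot u) (\<lambda>U. q_par ^ (u ! 0) * vec_word lam N [1..<N] a U)"
    unfolding opW_def
  proof (rule mlin_tensor)
    show "wsubst N (Poly_Mapping.single (mono u) c) = Poly_Mapping.single (mono (rot u)) (c * q_par ^ (u ! 0))" for c
      by (rule wsubst_single) (use assms in auto)
    show "MLin lam N (vec_word lam N [1..<N])" unfolding up by (rule MLin_word)
  qed
  moreover have "(\<lambda>U. q_par ^ (u ! 0) * vec_word lam N [1..<N] a U) \<in> Span lam N T0"
    by (intro span_smult span_word assms(3)) auto
  moreover have "length (rot u) = N" using assms by (cases u) (auto simp: rot_def)
  ultimately show ?thesis by (simp add: g1)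
qed



lemma mset_swl: "Suc p < length u \<Longrightarrow> mset (swl p u) = mset u"
  unfolding swl_def by (rule mset_swap) auto

lemma mset_rot: "u \<noteq> [] \<Longrightarrow> mset (rot u) = mset u"
  by (cases u) (auto simp: rot_def)

lemma nth_rot: "k < length u - 1 \<Longrightarrow> rot u ! k = u ! Suc k"
  by (cases u) (auto simp: rot_def nth_append)

definition Low :: "nat list \<Rightarrow> nat \<Rightarrow> nat list \<Rightarrow> bool" where
  "Low v N w \<longleftrightarrow> length w = N \<and> dec_rearr w \<noteq> dec_rearr v \<and> dom_le (dec_rearr w) (dec_rearr v)"

lemma Low_mset: "Low v N u \<Longrightarrow> length w = N \<Longrightarrow> mset w = mset u \<Longrightarrow> Low v N w"
  unfolding Low_def using dec_eq_mset by metis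

lemma Low_RH:
  assumes "length u = N" "length w = N" "length v = N" "Low v N u \<or> mset u = mset v" "RH u w"
  shows "Low v N w"
proof -
  have d: "dom_le (dec_rearr w) (dec_rearr u)" and m: "mset w \<noteq> mset u"
    using assms(5) by (auto simp: RH_def)
  show ?thesis
  proof (cases "mset u = mset v")
    case True
    then have du: "dec_rearr u = dec_rearr v" by (rule dec_eq_mset)
    have "dec_rearr w \<noteq> dec_rearr v"
      using m True du dec_eq_imp_mset by metis
    then show ?thesis using d du assms(2) by (simp add: Low_def)
  next
    case False
    then have L: "Low v N u" using assms(4) by simp
    then have du: "dom_le (dec_rearr u) (dec_rearr v)" "dec_rearr u \<noteq> dec_rearr v"
      by (auto simp: Low_def)
    have dwv: "dom_le (dec_rearr w) (dec_rearr v)"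
      by (rule dom_trans[OF d du(1)]) (use assms in simp)
    have "dec_rearr w \<noteq> dec_rearr v"
    proof
      assume e: "dec_rearr w = dec_rearr v"
      have "dec_rearr u = dec_rearr w"
        by (rule dom_antisym) (use du(1) d e assms in auto)
      with e du(2) show False by simp
    qed
    then show ?thesis using dwv assms(2) by (simp add: Low_def)
  qed
qed

definition Orb1 :: "nat list \<Rightarrow> nat \<Rightarrow> nat \<Rightarrow> nat \<Rightarrow> nat list \<Rightarrow> bool" where
  "Orb1 v N j c w \<longleftrightarrow> length w = N \<and> mset w = mset v \<and> (\<forall>k<c. w ! k = v ! k)
     \<and> (\<forall>k. j \<le> k \<longrightarrow> k < N \<longrightarrow> w ! k = v ! k)
     \<and> (\<forall>m. c < m \<longrightarrow> m < j \<longrightarrow> w ! m \<le> v ! (m - 1))"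

definition Orb3 :: "nat list \<Rightarrow> nat \<Rightarrow> nat \<Rightarrow> nat \<Rightarrow> nat list \<Rightarrow> bool" where
  "Orb3 v N j c w \<longleftrightarrow> length w = N \<and> mset w = mset v \<and> (\<forall>k. k < j - 1 \<longrightarrow> w ! k \<le> v ! k)
     \<and> (\<forall>k. j - 1 \<le> k \<longrightarrow> k < c \<longrightarrow> w ! k = v ! Suc k)
     \<and> (\<forall>m. c < m \<longrightarrow> m < N \<longrightarrow> v ! m \<le> w ! m)"

lemma T1:
  assumes "length v = N" "Suc c < j" "j \<le> N" "length u = N" "length w = N"
    "Low v N u \<or> Orb1 v N j (Suc c) u"
    "w = swl c u \<or> (w = u \<and> u ! Suc c \<le> u ! c) \<or> RH u w"
  shows "Low v N w \<or> Orb1 v N j c w"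
proof (cases "Low v N u")
  case True
  then show ?thesis using assms(7)
  proof (elim disjE)
    assume "w = swl c u" then show ?thesis
      using Low_mset[OF True assms(5)] mset_swl[of c u] assms by auto
  next
    assume "w = u \<and> u ! Suc c \<le> u ! c" then show ?thesis using True by simp
  next
    assume "RH u w" then show ?thesis using Low_RH[OF assms(4,5,1)] True by simp
  qed
next
  case False
  then have O: "Orb1 v N j (Suc c) u" using assms(6) by simp
  show ?thesis using assms(7)
  proof (elim disjE)
    assume w: "w = swl c u"
    have "Orb1 v N j c w"
      unfolding Orb1_def
    proof (intro conjI allI impI)
      show "length w = N" by fact
      show "mset w = mset v" using O mset_swl[of c u] assms w by (simp add: Orb1_def)
      fix k
      { assume "k < c" then show "w ! k = v ! k" using O w assms by (simp add: Orb1_def swl_def) }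
      { assume "j \<le> k" "k < N" then show "w ! k = v ! k" using O w assms by (simp add: Orb1_def swl_def) }
    next
      fix m assume m: "c < m" "m < j"
      show "w ! m \<le> v ! (m - 1)"
      proof (cases "m = Suc c")
        case True
        then show ?thesis using O w assms by (simp add: Orb1_def swl_def)
      next
        case False
        then show ?thesis using O w assms m by (simp add: Orb1_def swl_def)
      qed
    qed
    then show ?thesis by simp
  next
    assume w: "w = u \<and> u ! Suc c \<le> u ! c"
    have "Orb1 v N j c w"
      unfolding Orb1_def
    proof (intro conjI allI impI)
      show "length w = N" by fact
      show "mset w = mset v" using O w by (simp add: Orb1_def)
      fix k
      { assume "k < c" then show "w ! k = v ! k" using O w by (simp add: Orb1_def) }
      { assume "j \<le> k" "k < N" then show "w ! k = v ! k" using O w by (simp add: Orb1_def) }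
    next
      fix m assume m: "c < m" "m < j"
      show "w ! m \<le> v ! (m - 1)"
      proof (cases "m = Suc c")
        case True
        then show ?thesis using O w by (auto simp: Orb1_def)
      next
        case False
        then show ?thesis using O w m by (simp add: Orb1_def)
      qed
    qed
    then show ?thesis by simp
  next
    assume "RH u w" then show ?thesis
      using Low_RH[OF assms(4,5,1)] O by (auto simp: Orb1_def)
  qed
qed

lemma T3:
  assumes "length v = N" "j - 1 \<le> c" "Suc c < N" "length u = N" "length w = N"
    "Low v N u \<or> Orb3 v N j (Suc c) u"
    "w = swl c u \<or> (w = u \<and> u ! c \<le> u ! Suc c) \<or> RH u w"
  shows "Low v N w \<or> Orb3 v N j c w"
proof (cases "Low v N u")
  case True
  then show ?thesis using assms(7)
  proof (elim disjE)
    assume "w = swl c u" then show ?thesis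
      using Low_mset[OF True assms(5)] mset_swl[of c u] assms by auto
  next
    assume "w = u \<and> u ! c \<le> u ! Suc c" then show ?thesis using True by simp
  next
    assume "RH u w" then show ?thesis using Low_RH[OF assms(4,5,1)] True by simp
  qed
next
  case False
  then have O: "Orb3 v N j (Suc c) u" using assms(6) by simp
  show ?thesis using assms(7)
  proof (elim disjE)
    assume w: "w = swl c u"
    have "Orb3 v N j c w"
      unfolding Orb3_def
    proof (intro conjI allI impI)
      show "length w = N" by fact
      show "mset w = mset v" using O mset_swl[of c u] assms w by (simp add: Orb3_def)
      fix k
      { assume "k < j - 1" then show "w ! k \<le> v ! k" using O w assms by (simp add: Orb3_def swl_def) }
      { assume "j - 1 \<le> k" "k < c" then show "w ! k = v ! Suc k" using O w assms by (simp add: Orb3_def swl_def) }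
    next
      fix m assume m: "c < m" "m < N"
      show "v ! m \<le> w ! m"
      proof (cases "m = Suc c")
        case True
        then show ?thesis using O w assms by (simp add: Orb3_def swl_def)
      next
        case False
        then show ?thesis using O w assms m by (simp add: Orb3_def swl_def)
      qed
    qed
    then show ?thesis by simp
  next
    assume w: "w = u \<and> u ! c \<le> u ! Suc c"
    have "Orb3 v N j c w"
      unfolding Orb3_def
    proof (intro conjI allI impI)
      show "length w = N" by fact
      show "mset w = mset v" using O w by (simp add: Orb3_def)
      fix k
      { assume "k < j - 1" then show "w ! k \<le> v ! k" using O w by (simp add: Orb3_def) }
      { assume "j - 1 \<le> k" "k < c" then show "w ! k = v ! Suc k" using O w by (simp add: Orb3_def) }
    next
      fix m assume m: "c < m" "m < N"
      show "v ! m \<le> w ! m"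
      proof (cases "m = Suc c")
        case True
        then show ?thesis using O w assms by (auto simp: Orb3_def)
      next
        case False
        then show ?thesis using O w m by (simp add: Orb3_def)
      qed
    qed
    then show ?thesis by simp
  next
    assume "RH u w" then show ?thesis
      using Low_RH[OF assms(4,5,1)] O by (auto simp: Orb3_def)
  qed
qed

lemma TW:
  assumes "length v = N" "2 \<le> N" "1 \<le> j" "j \<le> N" "length u = N"
    "Low v N u \<or> Orb1 v N j 0 u"
  shows "Low v N (rot u) \<or> Orb3 v N j (N - 1) (rot u)"
proof -
  have ne: "u \<noteq> []" using assms by auto
  have lr: "length (rot u) = N" using ne assms by simp
  show ?thesis
  proof (cases "Low v N u")
    case True
    then show ?thesis using Low_mset[OF True lr] mset_rot[OF ne] by simp
  next
    case False
    then have O: "Orb1 v N j 0 u" using assms(6) by simp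
    have "Orb3 v N j (N - 1) (rot u)"
      unfolding Orb3_def
    proof (intro conjI allI impI)
      show "length (rot u) = N" by fact
      show "mset (rot u) = mset v" using O mset_rot[OF ne] by (simp add: Orb1_def)
      fix k
      { assume k: "k < j - 1"
        then have "rot u ! k = u ! Suc k" using assms by (intro nth_rot) auto
        moreover have "u ! Suc k \<le> v ! (Suc k - 1)"
        proof -
          have A: "\<forall>m. 0 < m \<longrightarrow> m < j \<longrightarrow> u ! m \<le> v ! (m - 1)" using O by (simp add: Orb1_def)
          have "Suc k < j" using k by simp
          then show ?thesis using A by blast
        qed
        ultimately show "rot u ! k \<le> v ! k" by simp }
      { assume k: "j - 1 \<le> k" "k < N - 1"
        then have "rot u ! k = u ! Suc k" using assms by (intro nth_rot) auto
        moreover have "u ! Suc k = v ! Suc k" using O k by (simp add: Orb1_def)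
        ultimately show "rot u ! k = v ! Suc k" by simp }
    next
      fix m assume "N - 1 < m" "m < N" then show "v ! m \<le> rot u ! m" by simp
    qed
    then show ?thesis by simp
  qed
qed

lemma sum_list_mset: "mset xs = mset ys \<Longrightarrow> sum_list xs = sum_list (ys :: nat list)"
  by (metis sum_mset_sum_list)

lemma Tfin:
  assumes "length v = N" "1 \<le> j" "Low v N w \<or> Orb3 v N j (j - 1) w" "length w = N"
  shows "tri_le w v"
proof (cases "Low v N w")
  case True then show ?thesis by (simp add: Low_def tri_le_def)
next
  case False
  then have O: "Orb3 v N j (j - 1) w" using assms(3) by simp
  have dd: "dec_rearr w = dec_rearr v" by (rule dec_eq_mset) (use O in \<open>simp add: Orb3_def\<close>)
  have "dom_le w v"
    unfolding dom_le_def
  proof (intro allI impI)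
    fix i assume i: "i \<le> length w"
    show "sum_list (take i w) \<le> sum_list (take i v)"
    proof (cases "i \<le> j - 1")
      case True
      have "(\<Sum>k<i. w ! k) \<le> (\<Sum>k<i. v ! k)"
        by (rule sum_mono) (use O True in \<open>auto simp: Orb3_def\<close>)
      then show ?thesis using i assms by (simp add: sum_take_nth)
    next
      case False
      have sl: "sum_list w = sum_list v" using O by (intro sum_list_mset) (simp add: Orb3_def)
      have "sum_list (take N w) = (\<Sum>k<N. w ! k)" by (rule sum_take_nth) (use assms in simp)
      moreover have "sum_list (take N v) = (\<Sum>k<N. v ! k)" by (rule sum_take_nth) (use assms in simp)
      ultimately have tot: "(\<Sum>k<N. w ! k) = (\<Sum>k<N. v ! k)" using sl assms by simp
      have sp: "(\<Sum>k<N. f k) = (\<Sum>k<i. f k) + (\<Sum>k\<in>{i..<N}. f k)" for f :: "nat \<Rightarrow> nat"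
      proof -
        have "{..<N} = {..<i} \<union> {i..<N}" using i assms by auto
        moreover have "sum f ({..<i} \<union> {i..<N}) = sum f {..<i} + sum f {i..<N}"
          by (rule sum.union_disjoint) auto
        ultimately show ?thesis by simp
      qed
      have "(\<Sum>k\<in>{i..<N}. v ! k) \<le> (\<Sum>k\<in>{i..<N}. w ! k)"
        by (rule sum_mono) (use O False in \<open>auto simp: Orb3_def\<close>)
      then have "(\<Sum>k<i. w ! k) \<le> (\<Sum>k<i. v ! k)"
        using tot sp[of "\<lambda>k. w ! k"] sp[of "\<lambda>k. v ! k"] by linarith
      then show ?thesis using i assms by (simp add: sum_take_nth)
    qed
  qed
  then show ?thesis using dd by (simp add: tri_le_def)
qed



lemma fold_step:
  assumes "Suc d \<le> k"
  shows "fold f (rev [k - Suc d..<k]) x = f (k - Suc d) (fold f (rev [k - d..<k]) x)"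
proof -
  have "[k - Suc d..<k] = (k - Suc d) # [Suc (k - Suc d)..<k]"
    using assms by (intro upt_conv_Cons) simp
  moreover have "Suc (k - Suc d) = k - d" using assms by simp
  ultimately show ?thesis by simp
qed

lemma stage1:
  assumes "2 \<le> N" "length v = N" "1 \<le> j" "j \<le> N" "d \<le> j - 1"
  shows "good lam N T0 (\<lambda>w. Low v N w \<or> Orb1 v N j (j - 1 - d) w)
           (fold (opTinv lam N) (rev [j - d..<j]) (tensor v (basis T0)))"
  using assms(5)
proof (induction d)
  case 0
  have "Orb1 v N j (j - 1) v" using assms by (auto simp: Orb1_def)
  then show ?case using assms span_basis by (auto intro: g1)
next
  case (Suc d)
  define i where "i = j - Suc d"
  have i: "1 \<le> i" "i < N" "i - 1 = j - 1 - Suc d" "i = Suc (j - 1 - Suc d)"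
    using Suc.prems assms by (auto simp: i_def)
  have IH: "good lam N T0 (\<lambda>w. Low v N w \<or> Orb1 v N j (Suc (j - 1 - Suc d)) w)
           (fold (opTinv lam N) (rev [j - d..<j]) (tensor v (basis T0)))"
    using Suc.IH Suc.prems by (simp add: Suc_diff_Suc)
  have "good lam N T0 (\<lambda>w. Low v N w \<or> Orb1 v N j (j - 1 - Suc d) w)
           (opTinv lam N i (fold (opTinv lam N) (rev [j - d..<j]) (tensor v (basis T0))))"
  proof (rule good_lift[where op = "opTinv lam N i", OF _ _ _ IH])
    show "opTinv lam N i (\<lambda>U. f U + g U) = (\<lambda>U. opTinv lam N i f U + opTinv lam N i g U)" for f g
      by (rule opTinv_add) (use i in simp)
    show "opTinv lam N i (\<lambda>U. 0) = (\<lambda>U. 0)" by (rule opTinv_zero) (use i in simp)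
    fix u a assume u: "Low v N u \<or> Orb1 v N j (Suc (j - 1 - Suc d)) u" "length u = N" "a \<in> Span lam N T0"
    show "good lam N T0 (\<lambda>w. Low v N w \<or> Orb1 v N j (j - 1 - Suc d) w) (opTinv lam N i (tensor u a))"
    proof (rule good_mono[OF opTinv_term[OF i(1,2) u(2,3)]])
      fix w assume w: "w = swl (i - 1) u \<or> w = u \<and> u ! i \<le> u ! (i - 1) \<or> RH u w" "length w = N"
      show "Low v N w \<or> Orb1 v N j (j - 1 - Suc d) w"
        by (rule T1[OF assms(2) _ assms(4) u(2) w(2) u(1)]) (use w(1) i Suc.prems in auto)
    qed
  qed
  then show ?case using fold_step[of d j "opTinv lam N" "tensor v (basis T0)"] Suc.prems
    by (simp add: i_def)
qed

lemma stage3: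
  assumes "2 \<le> N" "length v = N" "1 \<le> j" "j \<le> N" "d \<le> N - j"
    and f2: "good lam N T0 (\<lambda>w. Low v N w \<or> Orb3 v N j (N - 1) w) f2"
  shows "good lam N T0 (\<lambda>w. Low v N w \<or> Orb3 v N j (N - 1 - d) w)
           (fold (opT lam N) (rev [N - d..<N]) f2)"
  using assms(5)
proof (induction d)
  case 0
  then show ?case using f2 by simp
next
  case (Suc d)
  define i where "i = N - Suc d"
  have i: "1 \<le> i" "i < N" "i - 1 = N - 1 - Suc d" "i = Suc (N - 1 - Suc d)"
    using Suc.prems assms by (auto simp: i_def)
  have IH0: "good lam N T0 (\<lambda>w. Low v N w \<or> Orb3 v N j (N - 1 - d) w)
           (fold (opT lam N) (rev [N - d..<N]) f2)"
    using Suc.IH Suc.prems by simp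
  have e: "Suc (N - 1 - Suc d) = N - 1 - d" using Suc.prems assms by simp
  have IH: "good lam N T0 (\<lambda>w. Low v N w \<or> Orb3 v N j (Suc (N - 1 - Suc d)) w)
           (fold (opT lam N) (rev [N - d..<N]) f2)"
    unfolding e by (rule IH0)
  have "good lam N T0 (\<lambda>w. Low v N w \<or> Orb3 v N j (N - 1 - Suc d) w)
           (opT lam N i (fold (opT lam N) (rev [N - d..<N]) f2))"
  proof (rule good_lift[where op = "opT lam N i", OF _ _ _ IH])
    show "opT lam N i (\<lambda>U. f U + g U) = (\<lambda>U. opT lam N i f U + opT lam N i g U)" for f g
      by (rule opT_add) (use i in simp)
    show "opT lam N i (\<lambda>U. 0) = (\<lambda>U. 0)" by (rule opT_zero) (use i in simp)
    fix u a assume u: "Low v N u \<or> Orb3 v N j (Suc (N - 1 - Suc d)) u" "length u = N" "a \<in> Span lam N T0"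
    show "good lam N T0 (\<lambda>w. Low v N w \<or> Orb3 v N j (N - 1 - Suc d) w) (opT lam N i (tensor u a))"
    proof (rule good_mono[OF opT_term[OF i(1,2) u(2,3)]])
      fix w assume w: "w = swl (i - 1) u \<or> w = u \<and> u ! (i - 1) \<le> u ! i \<or> RH u w" "length w = N"
      show "Low v N w \<or> Orb3 v N j (N - 1 - Suc d) w"
        by (rule T3[OF assms(2) _ _ u(2) w(2) u(1)]) (use w(1) i Suc.prems assms in auto)
    qed
  qed
  then show ?case using fold_step[of d N "opT lam N" f2] Suc.prems assms
    by (simp add: i_def)
qed

lemma tri_le_sum:
  assumes "length u = length v" "tri_le u v"
  shows "sum_list u \<le> sum_list v"
proof -
  have su: "sum_list (dec_rearr u) = sum_list u" by (rule sum_list_mset) simp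
  have sv: "sum_list (dec_rearr v) = sum_list v" by (rule sum_list_mset) simp
  show ?thesis using assms(2) unfolding tri_le_def
  proof (elim disjE conjE)
    assume d: "dom_le (dec_rearr u) (dec_rearr v)"
    have "sum_list (take (length u) (dec_rearr u)) \<le> sum_list (take (length u) (dec_rearr v))"
      using d[unfolded dom_le_def, rule_format, of "length u"] by simp
    then show ?thesis using su sv assms(1) by simp
  next
    assume d: "dom_le u v"
    have "sum_list (take (length u) u) \<le> sum_list (take (length u) v)"
      using d[unfolded dom_le_def, rule_format, of "length u"] by simp
    then show ?thesis using assms(1) by simp
  qed
qed

lemma finite_LT: "length v = N \<Longrightarrow> finite {u. length u = N \<and> tri_lt u v}"
proof -
  assume lv: "length v = N"
  have "{u. length u = N \<and> tri_lt u v} \<subseteq> {u. set u \<subseteq> {..sum_list v} \<and> length u = N}"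
  proof
    fix u assume "u \<in> {u. length u = N \<and> tri_lt u v}"
    then have u: "length u = N" "tri_lt u v" by auto
    then have s: "sum_list u \<le> sum_list v" using lv by (intro tri_le_sum) (auto simp: tri_lt_def)
    have "set u \<subseteq> {..sum_list v}"
    proof
      fix x assume "x \<in> set u"
      then have "x \<le> sum_list u" by (simp add: member_le_sum_list)
      with s show "x \<in> {..sum_list v}" by simp
    qed
    then show "u \<in> {u. set u \<subseteq> {..sum_list v} \<and> length u = N}" using u by simp
  qed
  then show ?thesis by (rule finite_subset) (simp add: finite_lists_length_eq)
qed

lemma extract_good:
  assumes "good lam N T0 (\<lambda>w. tri_le w v) f" and lv: "length v = N"
  shows "\<exists>c. (\<forall>u. c u \<in> Span lam N T0) \<and>
     f = (\<lambda>U. tensor v (c v) U + (\<Sum>u\<in>{u. length u = N \<and> tri_lt u v}. tensor u (c u) U))"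
  using assms(1)
proof induction
  case g0
  show ?case
    by (rule exI[of _ "\<lambda>_ _. 0"]) (simp add: span_zero tensor_def)
next
  case (g1 u a)
  define c where "c = (\<lambda>w. if w = u then a else (\<lambda>_. 0))"
  have cs: "\<forall>w. c w \<in> Span lam N T0" using g1 span_zero by (simp add: c_def)
  show ?case
  proof (cases "u = v")
    case True
    have "(\<Sum>w\<in>{u. length u = N \<and> tri_lt u v}. tensor w (c w) U) = 0" for U
      by (rule sum.neutral) (auto simp: c_def tensor_def True tri_lt_def)
    then show ?thesis using cs by (intro exI[of _ c]) (auto simp: c_def True)
  next
    case False
    have uin: "u \<in> {u. length u = N \<and> tri_lt u v}" using g1 False by (simp add: tri_lt_def)
    have e1: "(\<Sum>w\<in>{u. length u = N \<and> tri_lt u v}. tensor w (c w) U)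
        = (\<Sum>w\<in>{u. length u = N \<and> tri_lt u v}. if w = u then tensor u a U else 0)" for U
      by (rule sum.cong) (auto simp: c_def tensor_def)
    have e2: "(\<Sum>w\<in>{u. length u = N \<and> tri_lt u v}. if w = u then tensor u a U else 0) = tensor u a U" for U
      using uin finite_LT[OF lv] by simp
    have e: "(\<Sum>w\<in>{u. length u = N \<and> tri_lt u v}. tensor w (c w) U) = tensor u a U" for U
      using e1 e2 by simp
    have cv: "tensor v (c v) U = 0" for U using False by (simp add: c_def tensor_def)
    show ?thesis using cs by (intro exI[of _ c]) (simp add: e cv)
  qed
next
  case (g2 f g)
  obtain c1 where c1: "\<forall>u. c1 u \<in> Span lam N T0"
    "f = (\<lambda>U. tensor v (c1 v) U + (\<Sum>u\<in>{u. length u = N \<and> tri_lt u v}. tensor u (c1 u) U))"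
    using g2.IH(1) by blast
  obtain c2 where c2: "\<forall>u. c2 u \<in> Span lam N T0"
    "g = (\<lambda>U. tensor v (c2 v) U + (\<Sum>u\<in>{u. length u = N \<and> tri_lt u v}. tensor u (c2 u) U))"
    using g2.IH(2) by blast
  define c where "c = (\<lambda>w U. c1 w U + c2 w U)"
  have cs: "\<forall>w. c w \<in> Span lam N T0" using c1(1) c2(1) span_add by (simp add: c_def)
  have "(\<lambda>U. f U + g U) = (\<lambda>U. tensor v (c v) U + (\<Sum>u\<in>{u. length u = N \<and> tri_lt u v}. tensor u (c u) U))"
    unfolding c1(2) c2(2) c_def tensor_add by (simp add: sum.distrib add_ac)
  then show ?case using cs by blast
qed



theorem theorem3p4:
  fixes lam :: "nat list" and N j :: nat and v :: "nat list" and T :: tab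
  assumes "2 \<le> N" and "is_partition lam N"
    and "length v = N" and "T \<in> Tab lam N"
    and "1 \<le> j" and "j \<le> N"
  shows "\<exists>H :: nat list \<Rightarrow> hecke.
           (\<forall>u. tri_le u v \<longrightarrow> is_hecke N (H u)) \<and>
           Xi lam N j (tensor v (basis T)) =
             (\<lambda>U. tensor v (hact lam N (basis T) (H v)) U
                 + (\<Sum>v'\<in>{v'. length v' = N \<and> tri_lt v' v}.
                      tensor v' (hact lam N (basis T) (H v')) U))"
proof -
  define f0 where "f0 = tensor v (basis T)"
  define f1 where "f1 = fold (opTinv lam N) (rev [1..<j]) f0"
  define f2 where "f2 = opW lam N f1"
  define f3 where "f3 = fold (opT lam N) (rev [j..<N]) f2"
  have g1: "good lam N T (\<lambda>w. Low v N w \<or> Orb1 v N j 0 w) f1"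
    using stage1[OF assms(1,3,5,6), of "j - 1" lam T] assms(5) by (simp add: f1_def f0_def)
  have g2: "good lam N T (\<lambda>w. Low v N w \<or> Orb3 v N j (N - 1) w) f2"
    unfolding f2_def
  proof (rule good_lift[where op = "opW lam N", OF opW_add opW_zero _ g1])
    fix u a assume u: "Low v N u \<or> Orb1 v N j 0 u" "length u = N" "a \<in> Span lam N T"
    show "good lam N T (\<lambda>w. Low v N w \<or> Orb3 v N j (N - 1) w) (opW lam N (tensor u a))"
    proof (rule good_mono[OF opW_term[OF assms(1) u(2,3)]])
      fix w assume "w = rot u"
      then show "Low v N w \<or> Orb3 v N j (N - 1) w"
        using TW[OF assms(3,1,5,6) u(2,1)] by simp
    qed
  qed
  have g3: "good lam N T (\<lambda>w. Low v N w \<or> Orb3 v N j (j - 1) w) f3"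
    using stage3[OF assms(1,3,5,6) _ g2, of "N - j"] assms(5,6) by (simp add: f3_def)
  have g4: "good lam N T (\<lambda>w. tri_le w v) (\<lambda>U. const (inverse (s_par ^ (N - j))) * f3 U)"
    by (rule good_mono[OF good_smult[OF g3]]) (rule Tfin[OF assms(3,5)])
  obtain c where c: "\<forall>u. c u \<in> Span lam N T"
    "(\<lambda>U. const (inverse (s_par ^ (N - j))) * f3 U)
       = (\<lambda>U. tensor v (c v) U + (\<Sum>u\<in>{u. length u = N \<and> tri_lt u v}. tensor u (c u) U))"
    using extract_good[OF g4 assms(3)] by blast
  have Xe: "Xi lam N j (tensor v (basis T)) = (\<lambda>U. const (inverse (s_par ^ (N - j))) * f3 U)"
    by (simp add: Xi_def Let_def f3_def f2_def f1_def f0_def)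
  define H where "H u = (SOME h. is_hecke N h \<and> c u = hact lam N (basis T) h)" for u
  have hH: "is_hecke N (H u) \<and> c u = hact lam N (basis T) (H u)" for u
  proof -
    have "\<exists>h. is_hecke N h \<and> c u = hact lam N (basis T) h" using c(1) by (simp add: Span_def)
    then show ?thesis unfolding H_def by (rule someI_ex)
  qed
  have cH: "c = (\<lambda>u. hact lam N (basis T) (H u))" using hH by (intro ext) simp
  show ?thesis
    by (rule exI[of _ H]) (use hH Xe c(2) cH in simp)
qed


end
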